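(* Let $H$ be a group, $K\lneq H$, $\phi\in\operatorname{Aut}(H)$, $G=\langle H,t;\ tkt^{-1}=\phi(k),\ k\in K\rangle$. The map $\overline{\chi_2}:N_H(K)\to\operatorname{Out}_H^{(V)}(G)$ sending $b$ to the outer class of $\alpha_{(\gamma_b,\,b^{-1}\phi(b))}$ is a homomorphism with kernel $JK$, where $J=Z(H)\cap\operatorname{Fix}(\phi)$.
   Context: $\gamma_b$ denotes $h\mapsto b^{-1}hb$; $\operatorname{Fix}(\phi)=\{h\in H:\phi(h)=h\}$. For $\delta\in\operatorname{Aut}(H)$ and $a\in H$ with $\delta(K)=K$ and $\phi(\delta(k))=a^{-1}\delta(\phi(k))a$ for all $k\in K$, $\alpha_{(\delta,a)}$ denotes the automorphism of $G$ given by $h\mapsto\delta(h)$ ($h\in H$), $t\mapsto at$. $\operatorname{Out}_H^{(V)}(G)$ is the subgroup of $\operatorname{Out}(G)$ consisting of the outer classes of the automorphisms $\alpha_{(\gamma_b,a)}$, where $b\in N_H(K)$, $a\in H$ and $ba\phi(b)^{-1}\in C_H(\phi(K))$. Automorphisms are composed left to right. *)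

theory Defs
  imports "HOL-Algebra.Algebra"
begin

text \<open>Letters: Inl h is the generator h of H, Inr True is t, Inr False is t^-1.\<close>

type_synonym 'h hnn_word = "('h + bool) list"

definition hnn_words :: "('h, 'm) monoid_scheme \<Rightarrow> 'h hnn_word set" where
  "hnn_words H = {w. \<forall>h. Inl h \<in> set w \<longrightarrow> h \<in> carrier H}"

inductive hnn_step :: "('h, 'm) monoid_scheme \<Rightarrow> 'h set \<Rightarrow> ('h \<Rightarrow> 'h) \<Rightarrow> 'h hnn_word \<Rightarrow> 'h hnn_word \<Rightarrow> bool"
  for H K \<phi> where
  step_mult: "g \<in> carrier H \<Longrightarrow> h \<in> carrier H \<Longrightarrow>
     hnn_step H K \<phi> (u @ [Inl g, Inl h] @ v) (u @ [Inl (g \<otimes>\<^bsub>H\<^esub> h)] @ v)"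
| step_one: "hnn_step H K \<phi> (u @ [Inl \<one>\<^bsub>H\<^esub>] @ v) (u @ v)"
| t_tinv: "hnn_step H K \<phi> (u @ [Inr True, Inr False] @ v) (u @ v)"
| tinv_t: "hnn_step H K \<phi> (u @ [Inr False, Inr True] @ v) (u @ v)"
| step_conj: "k \<in> K \<Longrightarrow>
     hnn_step H K \<phi> (u @ [Inr True, Inl k, Inr False] @ v) (u @ [Inl (\<phi> k)] @ v)"

definition hnn_rel :: "('h, 'm) monoid_scheme \<Rightarrow> 'h set \<Rightarrow> ('h \<Rightarrow> 'h) \<Rightarrow> ('h hnn_word \<times> 'h hnn_word) set" where
  "hnn_rel H K \<phi> = {(u, v). u \<in> hnn_words H \<and> v \<in> hnn_words H \<and>
      (sup (hnn_step H K \<phi>) (hnn_step H K \<phi>)\<inverse>\<inverse>)\<^sup>*\<^sup>* u v}"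

definition HNN :: "('h, 'm) monoid_scheme \<Rightarrow> 'h set \<Rightarrow> ('h \<Rightarrow> 'h) \<Rightarrow> 'h hnn_word set monoid" where
  "HNN H K \<phi> = \<lparr> carrier = hnn_words H // hnn_rel H K \<phi>,
     monoid.mult = (\<lambda>A B. hnn_rel H K \<phi> `` {(SOME u. u \<in> A) @ (SOME v. v \<in> B)}),
     one = hnn_rel H K \<phi> `` {[]} \<rparr>"

section \<open>Aut, Inn, Out (automorphisms composed left to right)\<close>

definition Aut :: "('a, 'm) monoid_scheme \<Rightarrow> ('a \<Rightarrow> 'a) monoid" where
  "Aut G = \<lparr> carrier = {f. f \<in> iso G G \<and> f \<in> extensional (carrier G)},
     monoid.mult = (\<lambda>f g. restrict (g \<circ> f) (carrier G)),
     one = restrict id (carrier G) \<rparr>"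

definition Inn :: "('a, 'm) monoid_scheme \<Rightarrow> ('a \<Rightarrow> 'a) set" where
  "Inn G = {restrict (\<lambda>x. inv\<^bsub>G\<^esub> g \<otimes>\<^bsub>G\<^esub> x \<otimes>\<^bsub>G\<^esub> g) (carrier G) | g. g \<in> carrier G}"

definition Out :: "('a, 'm) monoid_scheme \<Rightarrow> ('a \<Rightarrow> 'a) set monoid" where
  "Out G = Aut G Mod Inn G"

definition hnn_letter_map :: "('h, 'm) monoid_scheme \<Rightarrow> ('h \<Rightarrow> 'h) \<Rightarrow> 'h \<Rightarrow> ('h + bool) \<Rightarrow> 'h hnn_word" where
  "hnn_letter_map H \<delta> a x = (case x of
      Inl h \<Rightarrow> [Inl (\<delta> h)]
    | Inr True \<Rightarrow> [Inl a, Inr True]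
    | Inr False \<Rightarrow> [Inr False, Inl (inv\<^bsub>H\<^esub> a)])"

definition hnn_alpha :: "('h, 'm) monoid_scheme \<Rightarrow> 'h set \<Rightarrow> ('h \<Rightarrow> 'h) \<Rightarrow> ('h \<Rightarrow> 'h) \<Rightarrow> 'h
     \<Rightarrow> 'h hnn_word set \<Rightarrow> 'h hnn_word set" where
  "hnn_alpha H K \<phi> \<delta> a =
     (\<lambda>C \<in> carrier (HNN H K \<phi>).
        hnn_rel H K \<phi> `` {concat (map (hnn_letter_map H \<delta> a) (SOME w. w \<in> C))})"

definition conjg :: "('h, 'm) monoid_scheme \<Rightarrow> 'h \<Rightarrow> 'h \<Rightarrow> 'h" where
  "conjg H b = (\<lambda>h. inv\<^bsub>H\<^esub> b \<otimes>\<^bsub>H\<^esub> h \<otimes>\<^bsub>H\<^esub> b)"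

definition centralizer :: "('h, 'm) monoid_scheme \<Rightarrow> 'h set \<Rightarrow> 'h set" where
  "centralizer H S = {g \<in> carrier H. \<forall>s \<in> S. g \<otimes>\<^bsub>H\<^esub> s = s \<otimes>\<^bsub>H\<^esub> g}"

definition center :: "('h, 'm) monoid_scheme \<Rightarrow> 'h set" where
  "center H = centralizer H (carrier H)"

definition Fix :: "('h, 'm) monoid_scheme \<Rightarrow> ('h \<Rightarrow> 'h) \<Rightarrow> 'h set" where
  "Fix H \<phi> = {h \<in> carrier H. \<phi> h = h}"

definition OutV :: "('h, 'm) monoid_scheme \<Rightarrow> 'h set \<Rightarrow> ('h \<Rightarrow> 'h) \<Rightarrow> ('h hnn_word set \<Rightarrow> 'h hnn_word set) set set" where
  "OutV H K \<phi> = {Inn (HNN H K \<phi>) #>\<^bsub>Aut (HNN H K \<phi>)\<^esub> hnn_alpha H K \<phi> (conjg H b) a | b a.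
      b \<in> normalizer H K \<and> a \<in> carrier H \<and>
      b \<otimes>\<^bsub>H\<^esub> a \<otimes>\<^bsub>H\<^esub> inv\<^bsub>H\<^esub> (\<phi> b) \<in> centralizer H (\<phi> ` K)}"

definition chi2 :: "('h, 'm) monoid_scheme \<Rightarrow> 'h set \<Rightarrow> ('h \<Rightarrow> 'h) \<Rightarrow> 'h \<Rightarrow> ('h hnn_word set \<Rightarrow> 'h hnn_word set) set" where
  "chi2 H K \<phi> b = Inn (HNN H K \<phi>) #>\<^bsub>Aut (HNN H K \<phi>)\<^esub>
      hnn_alpha H K \<phi> (conjg H b) (inv\<^bsub>H\<^esub> b \<otimes>\<^bsub>H\<^esub> \<phi> b)"

end

theory Submission
  imports Defs
begin

lemma Aut_carrier_iff: "f \<in> carrier (Aut G) \<longleftrightarrow> f \<in> iso G G \<and> f \<in> extensional (carrier G)"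
  by (simp add: Aut_def)

lemma Aut_mult: "f \<otimes>\<^bsub>Aut G\<^esub> g = restrict (g \<circ> f) (carrier G)"
  by (simp add: Aut_def)

lemma Aut_one: "\<one>\<^bsub>Aut G\<^esub> = restrict id (carrier G)"
  by (simp add: Aut_def)

lemma iso_in_carrier: "f \<in> iso G G \<Longrightarrow> x \<in> carrier G \<Longrightarrow> f x \<in> carrier G"
  by (meson iso_imp_homomorphism hom_in_carrier)

lemma (in group) inv_cancel_left1 [simp]:
  "x \<in> carrier G \<Longrightarrow> y \<in> carrier G \<Longrightarrow> x \<otimes> (inv x \<otimes> y) = y"
  by (simp add: m_assoc[symmetric])

lemma (in group) inv_cancel_left2 [simp]:
  "x \<in> carrier G \<Longrightarrow> y \<in> carrier G \<Longrightarrow> inv x \<otimes> (x \<otimes> y) = y"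
  by (simp add: m_assoc[symmetric])

lemma Aut_group:
  assumes G: "group G"
  shows "group (Aut G)"
proof (rule groupI)
  interpret G: group G by (rule G)
  fix x y z
  show "\<one>\<^bsub>Aut G\<^esub> \<in> carrier (Aut G)"
    unfolding Aut_carrier_iff Aut_one
    by (auto intro: G.iso_eq[OF id_iso])
  {
    assume x: "x \<in> carrier (Aut G)" and y: "y \<in> carrier (Aut G)"
    have "y \<circ> x \<in> iso G G" using x y iso_set_trans[of x G G y G] by (simp add: Aut_carrier_iff)
    then show "x \<otimes>\<^bsub>Aut G\<^esub> y \<in> carrier (Aut G)"
      unfolding Aut_carrier_iff Aut_mult
      by (auto intro: G.iso_eq)
  }
  {
    assume x: "x \<in> carrier (Aut G)" and y: "y \<in> carrier (Aut G)" and z: "z \<in> carrier (Aut G)"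
    show "x \<otimes>\<^bsub>Aut G\<^esub> y \<otimes>\<^bsub>Aut G\<^esub> z = x \<otimes>\<^bsub>Aut G\<^esub> (y \<otimes>\<^bsub>Aut G\<^esub> z)"
      unfolding Aut_mult using x y
      by (auto simp: Aut_carrier_iff iso_in_carrier)
  }
  {
    assume x: "x \<in> carrier (Aut G)"
    show "\<one>\<^bsub>Aut G\<^esub> \<otimes>\<^bsub>Aut G\<^esub> x = x"
      unfolding Aut_mult Aut_one using x
      by (auto simp: Aut_carrier_iff extensional_def)
    let ?y = "restrict (inv_into (carrier G) x) (carrier G)"
    have xi: "x \<in> iso G G" using x by (simp add: Aut_carrier_iff)
    then have bij: "bij_betw x (carrier G) (carrier G)" by (simp add: iso_def)
    have "?y \<in> carrier (Aut G)"
      unfolding Aut_carrier_iff using G.iso_set_sym[OF xi]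
      by (auto intro: G.iso_eq)
    moreover have "?y \<otimes>\<^bsub>Aut G\<^esub> x = \<one>\<^bsub>Aut G\<^esub>"
      unfolding Aut_mult Aut_one using bij
      by (auto simp: bij_betw_inv_into_right)
    ultimately show "\<exists>y\<in>carrier (Aut G). y \<otimes>\<^bsub>Aut G\<^esub> x = \<one>\<^bsub>Aut G\<^esub>" by blast
  }
qed

definition conjf :: "('a, 'm) monoid_scheme \<Rightarrow> 'a \<Rightarrow> 'a \<Rightarrow> 'a" where
  "conjf G g = restrict (\<lambda>x. inv\<^bsub>G\<^esub> g \<otimes>\<^bsub>G\<^esub> x \<otimes>\<^bsub>G\<^esub> g) (carrier G)"

lemma Inn_conjf: "Inn G = {conjf G g | g. g \<in> carrier G}"
  by (simp add: Inn_def conjf_def)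

context group begin

lemma conjf_iso: "g \<in> carrier G \<Longrightarrow> conjf G g \<in> iso G G"
proof -
  assume g: "g \<in> carrier G"
  have "group_isomorphisms G G (conjf G g) (conjf G (inv g))"
    unfolding group_isomorphisms_def hom_def conjf_def using g
    by (auto simp: m_assoc inv_mult_group)
  then show ?thesis by (rule group_isomorphisms_imp_iso)
qed

lemma conjf_Aut: "g \<in> carrier G \<Longrightarrow> conjf G g \<in> carrier (Aut G)"
  using conjf_iso by (simp add: Aut_carrier_iff) (simp add: conjf_def)

lemma conjf_mult: "g \<in> carrier G \<Longrightarrow> h \<in> carrier G \<Longrightarrow>
   conjf G g \<otimes>\<^bsub>Aut G\<^esub> conjf G h = conjf G (g \<otimes> h)"
  unfolding Aut_mult conjf_def
  by (auto simp: m_assoc inv_mult_group)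

lemma conjf_one: "conjf G \<one> = \<one>\<^bsub>Aut G\<^esub>"
  unfolding Aut_one conjf_def by auto

lemma conjf_inv: "g \<in> carrier G \<Longrightarrow> inv\<^bsub>Aut G\<^esub> (conjf G g) = conjf G (inv g)"
proof -
  assume g: "g \<in> carrier G"
  interpret A: group "Aut G" by (rule Aut_group) (rule is_group)
  show ?thesis
    by (rule A.inv_equality) (use g in \<open>simp_all add: conjf_mult conjf_one conjf_Aut\<close>)
qed

lemma Inn_normal: "Inn G \<lhd> Aut G"
proof -
  interpret A: group "Aut G" by (rule Aut_group) (rule is_group)
  have sub: "subgroup (Inn G) (Aut G)"
  proof (rule A.subgroupI)
    show "Inn G \<subseteq> carrier (Aut G)" by (auto simp: Inn_conjf conjf_Aut)
    show "Inn G \<noteq> {}" by (auto simp: Inn_conjf)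
    show "inv\<^bsub>Aut G\<^esub> a \<in> Inn G" if "a \<in> Inn G" for a
      using that by (auto simp: Inn_conjf conjf_inv)
    show "a \<otimes>\<^bsub>Aut G\<^esub> b \<in> Inn G" if "a \<in> Inn G" "b \<in> Inn G" for a b
      using that by (auto simp: Inn_conjf conjf_mult)
  qed
  have "x \<otimes>\<^bsub>Aut G\<^esub> h \<otimes>\<^bsub>Aut G\<^esub> inv\<^bsub>Aut G\<^esub> x \<in> Inn G"
    if x: "x \<in> carrier (Aut G)" and h: "h \<in> Inn G" for x h
  proof -
    obtain g where g: "g \<in> carrier G" and hg: "h = conjf G g" using h by (auto simp: Inn_conjf)
    define y where "y = inv\<^bsub>Aut G\<^esub> x"
    have y: "y \<in> carrier (Aut G)" using x by (simp add: y_def)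
    have xy: "x \<otimes>\<^bsub>Aut G\<^esub> y = \<one>\<^bsub>Aut G\<^esub>" using x by (simp add: y_def)
    have yx: "\<And>z. z \<in> carrier G \<Longrightarrow> y (x z) = z"
    proof -
      fix z assume z: "z \<in> carrier G"
      have "(x \<otimes>\<^bsub>Aut G\<^esub> y) z = \<one>\<^bsub>Aut G\<^esub> z" by (simp add: xy)
      then show "y (x z) = z" using z by (simp add: Aut_mult Aut_one)
    qed
    have yiso: "y \<in> iso G G" and xiso: "x \<in> iso G G" and ye: "y \<in> extensional (carrier G)"
      using x y by (auto simp: Aut_carrier_iff)
    interpret Y: group_hom G G y
      using yiso by (simp add: group_hom_def group_hom_axioms_def iso_imp_homomorphism is_group)
    have yg: "y g \<in> carrier G" using g by simp
    have pt: "y (h (x z)) = inv (y g) \<otimes> z \<otimes> y g" if z: "z \<in> carrier G" for z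
    proof -
      have xz: "x z \<in> carrier G" using z xiso by (simp add: iso_in_carrier)
      show ?thesis using z xz g yx by (simp add: hg conjf_def Y.hom_mult Y.hom_inv)
    qed
    have "x \<otimes>\<^bsub>Aut G\<^esub> h \<otimes>\<^bsub>Aut G\<^esub> y = conjf G (y g)"
      using xiso pt by (auto simp: Aut_mult iso_in_carrier conjf_def)
    then show ?thesis using yg by (auto simp: y_def Inn_conjf)
  qed
  then show ?thesis using sub by (simp add: A.normal_inv_iff)
qed

end

locale hnn = H: group H for H :: "'h monoid" (structure) +
  fixes K :: "'h set" and \<phi> :: "'h \<Rightarrow> 'h"
  assumes K: "subgroup K H" and phi: "\<phi> \<in> iso H H"
begin

abbreviation W where "W \<equiv> hnn_words H"
abbreviation G where "G \<equiv> HNN H K \<phi>"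
abbreviation step where "step \<equiv> hnn_step H K \<phi>"
abbreviation SS where "SS \<equiv> sup step step\<inverse>\<inverse>"
abbreviation req (infix "\<bowtie>" 50) where "u \<bowtie> v \<equiv> (u, v) \<in> hnn_rel H K \<phi>"
abbreviation cls where "cls w \<equiv> hnn_rel H K \<phi> `` {w}"

lemma K_sub: "K \<subseteq> carrier H" using K by (rule subgroup.subset)

lemma phi_hom: "\<phi> \<in> hom H H" using phi by (rule iso_imp_homomorphism)

lemma phi_carr [simp]: "x \<in> carrier H \<Longrightarrow> \<phi> x \<in> carrier H"
  using phi_hom by (rule hom_in_carrier)

lemma phi_mult [simp]: "x \<in> carrier H \<Longrightarrow> y \<in> carrier H \<Longrightarrow> \<phi> (x \<otimes> y) = \<phi> x \<otimes> \<phi> y"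
  using phi_hom by (simp add: hom_mult)

lemma phi_K [simp]: "k \<in> K \<Longrightarrow> \<phi> k \<in> carrier H"
  using K_sub by auto

lemma W_simps [simp]:
  "[] \<in> W"
  "(Inl h # w \<in> W) \<longleftrightarrow> h \<in> carrier H \<and> w \<in> W"
  "(Inr b # w \<in> W) \<longleftrightarrow> w \<in> W"
  "(u @ v \<in> W) \<longleftrightarrow> u \<in> W \<and> v \<in> W"
  by (auto simp: hnn_words_def)

lemma step_app:
  assumes "step x y" shows "step (p @ x @ q) (p @ y @ q)"
  using assms
proof cases
  case (step_mult g h u v)
  then show ?thesis using hnn_step.step_mult[of g H h K \<phi> "p @ u" "v @ q"] by simp
next
  case (step_one u v)
  then show ?thesis using hnn_step.step_one[of H K \<phi> "p @ u" "v @ q"] by simp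
next
  case (t_tinv u v)
  then show ?thesis using hnn_step.t_tinv[of H K \<phi> "p @ u" "v @ q"] by simp
next
  case (tinv_t u v)
  then show ?thesis using hnn_step.tinv_t[of H K \<phi> "p @ u" "v @ q"] by simp
next
  case (step_conj k u v)
  then show ?thesis using hnn_step.step_conj[of k K H \<phi> "p @ u" "v @ q"] by simp
qed

lemma step_W: assumes "step x y" shows "x \<in> W \<longleftrightarrow> y \<in> W"
  using assms
proof cases
  case (step_mult g h u v)
  then show ?thesis by auto
next
  case (step_conj k u v)
  then show ?thesis using K_sub by auto
qed auto

lemma SS_W: "SS\<^sup>*\<^sup>* u v \<Longrightarrow> u \<in> W \<longleftrightarrow> v \<in> W"
  by (induction rule: rtranclp_induct) (auto dest: step_W)

lemma rel_iff: "u \<bowtie> v \<longleftrightarrow> u \<in> W \<and> v \<in> W \<and> SS\<^sup>*\<^sup>* u v"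
  by (simp add: hnn_rel_def)

lemma rel_W: "u \<bowtie> v \<Longrightarrow> u \<in> W" "u \<bowtie> v \<Longrightarrow> v \<in> W"
  by (auto simp: rel_iff)

lemma rel_refl: "w \<in> W \<Longrightarrow> w \<bowtie> w"
  by (simp add: rel_iff)

lemma SS_sym: "SS\<^sup>*\<^sup>* u v \<Longrightarrow> SS\<^sup>*\<^sup>* v u"
proof -
  have "(sup step step\<inverse>\<inverse>)\<inverse>\<inverse> = sup step step\<inverse>\<inverse>" by (auto simp: fun_eq_iff)
  then show "SS\<^sup>*\<^sup>* u v \<Longrightarrow> SS\<^sup>*\<^sup>* v u"
    by (metis rtranclp_converseD rtranclp_converseI)
qed

lemma rel_sym: "u \<bowtie> v \<Longrightarrow> v \<bowtie> u"
  by (auto simp: rel_iff intro: SS_sym)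

lemma rel_trans: "u \<bowtie> v \<Longrightarrow> v \<bowtie> w \<Longrightarrow> u \<bowtie> w"
  by (auto simp: rel_iff)

lemma equiv_rel: "equiv W (hnn_rel H K \<phi>)"
  by (rule equivI) (auto simp: refl_on_def sym_def trans_def rel_refl intro: rel_sym rel_trans dest: rel_W)

lemma SS_app: "SS\<^sup>*\<^sup>* x y \<Longrightarrow> SS\<^sup>*\<^sup>* (p @ x @ q) (p @ y @ q)"
proof (induction rule: rtranclp_induct)
  case (step y z)
  then have "SS (p @ y @ q) (p @ z @ q)" by (auto intro: step_app)
  then show ?case using step.IH by (meson rtranclp.rtrancl_into_rtrancl)
qed simp

lemma rel_app: "u \<bowtie> u' \<Longrightarrow> v \<bowtie> v' \<Longrightarrow> u @ v \<bowtie> u' @ v'"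
proof -
  assume a: "u \<bowtie> u'" "v \<bowtie> v'"
  then have "SS\<^sup>*\<^sup>* (u @ v) (u' @ v)" using SS_app[of u u' "[]" v] by (simp add: rel_iff)
  moreover have "SS\<^sup>*\<^sup>* (u' @ v) (u' @ v')" using a SS_app[of v v' u' "[]"] by (simp add: rel_iff)
  ultimately show ?thesis using a by (auto simp: rel_iff)
qed

lemma rel_app_left: "v \<bowtie> v' \<Longrightarrow> u \<in> W \<Longrightarrow> u @ v \<bowtie> u @ v'"
  by (rule rel_app) (auto intro: rel_refl)

lemma rel_app_right: "u \<bowtie> u' \<Longrightarrow> v \<in> W \<Longrightarrow> u @ v \<bowtie> u' @ v"
  by (rule rel_app) (auto intro: rel_refl)

lemma step_rel: "step x y \<Longrightarrow> x \<in> W \<Longrightarrow> x \<bowtie> y"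
  using step_W by (auto simp: rel_iff)

lemma cls_eq_iff: "u \<in> W \<Longrightarrow> v \<in> W \<Longrightarrow> cls u = cls v \<longleftrightarrow> u \<bowtie> v"
  using equiv_class_eq_iff[OF equiv_rel, of u v] by blast

end

context hnn begin

lemma carrier_G: "carrier G = cls ` W"
  by (simp add: HNN_def quotient_def UNION_singleton_eq_range)

lemma cls_in_G [simp]: "w \<in> W \<Longrightarrow> cls w \<in> carrier G"
  by (simp add: carrier_G)

lemma some_cls: "w \<in> W \<Longrightarrow> w \<bowtie> (SOME u. u \<in> cls w)"
proof -
  assume w: "w \<in> W"
  then have "w \<in> cls w" by (simp add: rel_refl)
  then have "(SOME u. u \<in> cls w) \<in> cls w" by (rule someI)
  then show ?thesis by simp
qed

lemma cls_eq: "u \<bowtie> v \<Longrightarrow> cls u = cls v"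
  using cls_eq_iff[OF rel_W(1) rel_W(2)] by blast

lemma mult_cls: "u \<in> W \<Longrightarrow> v \<in> W \<Longrightarrow> cls u \<otimes>\<^bsub>G\<^esub> cls v = cls (u @ v)"
proof -
  assume u: "u \<in> W" and v: "v \<in> W"
  have "(SOME x. x \<in> cls u) @ (SOME x. x \<in> cls v) \<bowtie> u @ v"
    using rel_app[OF rel_sym[OF some_cls[OF u]] rel_sym[OF some_cls[OF v]]] .
  then show ?thesis by (simp add: HNN_def cls_eq)
qed

lemma one_G: "\<one>\<^bsub>G\<^esub> = cls []"
  by (simp add: HNN_def)

fun invl :: "'h + bool \<Rightarrow> 'h + bool" where
  "invl (Inl h) = Inl (inv h)"
| "invl (Inr b) = Inr (\<not> b)"

definition invw :: "'h hnn_word \<Rightarrow> 'h hnn_word" where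
  "invw w = rev (map invl w)"

lemma invw_W: "w \<in> W \<Longrightarrow> invw w \<in> W"
  apply (induction w)
   apply (simp add: invw_def)
  apply (rename_tac a w, case_tac a)
   apply (auto simp: invw_def)
  done

lemma letter_inv_rel: "[a] \<in> W \<Longrightarrow> [invl a, a] \<bowtie> []"
proof (cases a)
  case (Inl h)
  assume a: "[a] \<in> W"
  then have h: "h \<in> carrier H" using Inl by simp
  have "[Inl (inv h), Inl h] \<bowtie> [Inl (inv h \<otimes> h)]"
    using step_rel[OF hnn_step.step_mult[of "inv h" H h K \<phi> "[]" "[]"]] h by simp
  moreover have "[Inl (inv h \<otimes> h)] \<bowtie> []"
    using step_rel[OF hnn_step.step_one[of H K \<phi> "[]" "[]"]] h by simp
  ultimately show ?thesis using Inl by (auto intro: rel_trans)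
next
  case (Inr b)
  then show ?thesis
    using step_rel[OF hnn_step.t_tinv[of H K \<phi> "[]" "[]"]] step_rel[OF hnn_step.tinv_t[of H K \<phi> "[]" "[]"]]
    by (cases b) auto
qed

lemma invw_rel: "w \<in> W \<Longrightarrow> invw w @ w \<bowtie> []"
proof (induction w)
  case Nil
  then show ?case by (simp add: invw_def rel_refl)
next
  case (Cons a w)
  have aW: "[a] \<in> W" and wW: "w \<in> W" using Cons.prems W_simps(4)[of "[a]" w] by auto
  have e: "invw (a # w) @ a # w = invw w @ [invl a, a] @ w" by (simp add: invw_def)
  have "invw w @ [invl a, a] @ w \<bowtie> invw w @ [] @ w"
    using letter_inv_rel[OF aW] invw_W[OF wW] wW by (intro rel_app_left rel_app_right) auto
  moreover have "invw w @ [] @ w \<bowtie> []" using Cons.IH wW by simp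
  ultimately show ?case unfolding e by (rule rel_trans)
qed


lemma group_G: "group G"
proof (rule groupI)
  show "\<one>\<^bsub>G\<^esub> \<in> carrier G" by (simp add: one_G)
next
  fix x y assume "x \<in> carrier G" "y \<in> carrier G"
  then obtain u v where "u \<in> W" "v \<in> W" "x = cls u" "y = cls v" by (auto simp: carrier_G)
  then show "x \<otimes>\<^bsub>G\<^esub> y \<in> carrier G" by (simp add: mult_cls)
next
  fix x y z assume "x \<in> carrier G" "y \<in> carrier G" "z \<in> carrier G"
  then obtain u v w where "u \<in> W" "v \<in> W" "w \<in> W" "x = cls u" "y = cls v" "z = cls w"
    by (auto simp: carrier_G)
  then show "x \<otimes>\<^bsub>G\<^esub> y \<otimes>\<^bsub>G\<^esub> z = x \<otimes>\<^bsub>G\<^esub> (y \<otimes>\<^bsub>G\<^esub> z)" by (simp add: mult_cls)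
next
  fix x assume "x \<in> carrier G"
  then obtain u where "u \<in> W" "x = cls u" by (auto simp: carrier_G)
  then show "\<one>\<^bsub>G\<^esub> \<otimes>\<^bsub>G\<^esub> x = x" by (simp add: mult_cls one_G)
next
  fix x assume "x \<in> carrier G"
  then obtain w where w: "w \<in> W" and x: "x = cls w" by (auto simp: carrier_G)
  have "cls (invw w) \<otimes>\<^bsub>G\<^esub> x = \<one>\<^bsub>G\<^esub>"
    using w x invw_W[OF w] invw_rel[OF w] by (simp add: mult_cls one_G cls_eq)
  then show "\<exists>y\<in>carrier G. y \<otimes>\<^bsub>G\<^esub> x = \<one>\<^bsub>G\<^esub>" using invw_W[OF w] by auto
qed

end

definition crep :: "('a, 'm) monoid_scheme \<Rightarrow> 'a set \<Rightarrow> 'a \<Rightarrow> 'a" where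
  "crep G S h = (if h \<in> S then \<one>\<^bsub>G\<^esub> else SOME c. c \<in> carrier G \<and> inv\<^bsub>G\<^esub> h \<otimes>\<^bsub>G\<^esub> c \<in> S)"

context group begin

lemma sub_inv_mult: "subgroup S G \<Longrightarrow> a \<in> carrier G \<Longrightarrow> b \<in> carrier G \<Longrightarrow>
   inv a \<otimes> b \<in> S \<Longrightarrow> inv b \<otimes> a \<in> S"
proof -
  assume S: "subgroup S G" and a: "a \<in> carrier G" and b: "b \<in> carrier G" and ab: "inv a \<otimes> b \<in> S"
  have "inv (inv a \<otimes> b) \<in> S" using S ab by (rule subgroup.m_inv_closed)
  then show ?thesis using a b by (simp add: inv_mult_group)
qed

lemma sub_trans: "subgroup S G \<Longrightarrow> a \<in> carrier G \<Longrightarrow> b \<in> carrier G \<Longrightarrow> c \<in> carrier G \<Longrightarrow>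
   inv a \<otimes> b \<in> S \<Longrightarrow> inv b \<otimes> c \<in> S \<Longrightarrow> inv a \<otimes> c \<in> S"
proof -
  assume S: "subgroup S G" and abc: "a \<in> carrier G" "b \<in> carrier G" "c \<in> carrier G"
    and ab: "inv a \<otimes> b \<in> S" and bc: "inv b \<otimes> c \<in> S"
  have "(inv a \<otimes> b) \<otimes> (inv b \<otimes> c) \<in> S" using S ab bc by (rule subgroup.m_closed)
  then show ?thesis using abc by (simp add: m_assoc)
qed

lemma crep_props:
  assumes S: "subgroup S G" and h: "h \<in> carrier G"
  shows "crep G S h \<in> carrier G \<and> inv h \<otimes> crep G S h \<in> S"
proof (cases "h \<in> S")
  case True
  then show ?thesis using S h by (simp add: crep_def subgroup.m_inv_closed)
next
  case False
  have "h \<in> carrier G \<and> inv h \<otimes> h \<in> S" using h S by (simp add: subgroup.one_closed)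
  then have "(SOME c. c \<in> carrier G \<and> inv h \<otimes> c \<in> S) \<in> carrier G \<and>
      inv h \<otimes> (SOME c. c \<in> carrier G \<and> inv h \<otimes> c \<in> S) \<in> S"
    by (rule someI)
  then show ?thesis using False by (simp add: crep_def)
qed

lemma crep_carr: "subgroup S G \<Longrightarrow> h \<in> carrier G \<Longrightarrow> crep G S h \<in> carrier G"
  using crep_props by blast

lemma crep_mem: "subgroup S G \<Longrightarrow> h \<in> carrier G \<Longrightarrow> inv (crep G S h) \<otimes> h \<in> S"
  using crep_props sub_inv_mult by blast

lemma crep_in_S_iff: "subgroup S G \<Longrightarrow> h \<in> carrier G \<Longrightarrow> inv a \<otimes> b \<in> S \<Longrightarrow>
   a \<in> carrier G \<Longrightarrow> b \<in> carrier G \<Longrightarrow> a \<in> S \<longleftrightarrow> b \<in> S"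
proof -
  assume S: "subgroup S G" and ab: "inv a \<otimes> b \<in> S" and a: "a \<in> carrier G" and b: "b \<in> carrier G"
  show ?thesis
  proof
    assume "a \<in> S"
    then have "a \<otimes> (inv a \<otimes> b) \<in> S" using S ab by (simp add: subgroup.m_closed)
    then show "b \<in> S" using a b by simp
  next
    assume "b \<in> S"
    moreover have "inv b \<otimes> a \<in> S" using S a b ab by (rule sub_inv_mult)
    ultimately have "b \<otimes> (inv b \<otimes> a) \<in> S" using S by (simp add: subgroup.m_closed)
    then show "a \<in> S" using a b by simp
  qed
qed

lemma crep_eq:
  assumes S: "subgroup S G" and h1: "h1 \<in> carrier G" and h2: "h2 \<in> carrier G"
    and h12: "inv h1 \<otimes> h2 \<in> S"
  shows "crep G S h1 = crep G S h2"
proof -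
  have iff: "h1 \<in> S \<longleftrightarrow> h2 \<in> S" using crep_in_S_iff[OF S h1 h12 h1 h2] .
  have "(\<lambda>c. c \<in> carrier G \<and> inv h1 \<otimes> c \<in> S) = (\<lambda>c. c \<in> carrier G \<and> inv h2 \<otimes> c \<in> S)"
  proof (rule ext, rule iffI)
    fix c assume "c \<in> carrier G \<and> inv h1 \<otimes> c \<in> S"
    then show "c \<in> carrier G \<and> inv h2 \<otimes> c \<in> S"
      using sub_trans[OF S h2 h1 _ sub_inv_mult[OF S h1 h2 h12]] by blast
  next
    fix c assume "c \<in> carrier G \<and> inv h2 \<otimes> c \<in> S"
    then show "c \<in> carrier G \<and> inv h1 \<otimes> c \<in> S"
      using sub_trans[OF S h1 h2 _ h12] by blast
  qed
  then show ?thesis using iff by (simp add: crep_def)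
qed

lemma crep_one_iff: "subgroup S G \<Longrightarrow> h \<in> carrier G \<Longrightarrow> crep G S h = \<one> \<longleftrightarrow> h \<in> S"
proof -
  assume S: "subgroup S G" and h: "h \<in> carrier G"
  show ?thesis
  proof
    assume "crep G S h = \<one>"
    then have "inv \<one> \<otimes> h \<in> S" using crep_mem[OF S h] by simp
    then show "h \<in> S" using h by simp
  qed (simp add: crep_def)
qed

lemma crep_idem: "subgroup S G \<Longrightarrow> h \<in> carrier G \<Longrightarrow> crep G S (crep G S h) = crep G S h"
  by (rule crep_eq) (auto intro: crep_carr crep_mem)

lemma crep_eqD: "subgroup S G \<Longrightarrow> h1 \<in> carrier G \<Longrightarrow> h2 \<in> carrier G \<Longrightarrow>
   crep G S h1 = crep G S h2 \<Longrightarrow> inv h1 \<otimes> h2 \<in> S"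
proof -
  assume S: "subgroup S G" and h: "h1 \<in> carrier G" "h2 \<in> carrier G" and e: "crep G S h1 = crep G S h2"
  have "inv h1 \<otimes> crep G S h1 \<in> S" using crep_props[OF S h(1)] by blast
  moreover have "inv (crep G S h2) \<otimes> h2 \<in> S" using crep_mem[OF S h(2)] .
  ultimately show ?thesis using sub_trans[OF S h(1) crep_carr[OF S h(1)] h(2)] e by simp
qed

end

type_synonym 'h nform = "('h \<times> bool) list \<times> 'h"

context hnn begin

definition Sg :: "bool \<Rightarrow> 'h set" where "Sg e = (if e then \<phi> ` K else K)"

lemma phi_group_hom: "group_hom H H \<phi>"
  by (simp add: group_hom_def group_hom_axioms_def phi_hom H.is_group)

lemma Sg_sub: "subgroup (Sg e) H"
  using K group_hom.subgroup_img_is_subgroup[OF phi_group_hom K] by (simp add: Sg_def)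

lemma Sg_carr: "s \<in> Sg e \<Longrightarrow> s \<in> carrier H"
  using subgroup.mem_carrier[OF Sg_sub] .

abbreviation rp where "rp e h \<equiv> crep H (Sg e) h"

definition phii where "phii = inv_into (carrier H) \<phi>"

lemma phi_inj: "inj_on \<phi> (carrier H)" using phi by (simp add: iso_iff)

lemma phii_phi [simp]: "x \<in> carrier H \<Longrightarrow> phii (\<phi> x) = x"
  unfolding phii_def using phi_inj by (rule inv_into_f_f)

lemma K_carr: "k \<in> K \<Longrightarrow> k \<in> carrier H"
  using K_sub by blast

lemma phi_img_K: "s \<in> \<phi> ` K \<Longrightarrow> phii s \<in> K \<and> \<phi> (phii s) = s"
proof -
  assume "s \<in> \<phi> ` K"
  then obtain k where k: "k \<in> K" "s = \<phi> k" by blast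
  then show ?thesis using phii_phi[OF K_carr[OF k(1)]] by simp
qed

definition pass :: "bool \<Rightarrow> 'h \<Rightarrow> 'h" where "pass e s = (if e then phii s else \<phi> s)"

lemma pass_mem: "s \<in> Sg e \<Longrightarrow> pass e s \<in> Sg (\<not> e)"
proof (cases e)
  case True
  assume "s \<in> Sg e"
  then show ?thesis using True phi_img_K[of s] by (simp add: Sg_def pass_def)
next
  case False
  assume "s \<in> Sg e"
  then show ?thesis using False by (simp add: Sg_def pass_def)
qed

lemma pass_carr: "s \<in> Sg e \<Longrightarrow> pass e s \<in> carrier H"
  using pass_mem Sg_carr by blast

lemma pass_mult: "s1 \<in> Sg e \<Longrightarrow> s2 \<in> Sg e \<Longrightarrow> pass e (s1 \<otimes> s2) = pass e s1 \<otimes> pass e s2"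
proof (cases e)
  case True
  assume s: "s1 \<in> Sg e" "s2 \<in> Sg e"
  then obtain k1 k2 where k: "k1 \<in> K" "k2 \<in> K" "s1 = \<phi> k1" "s2 = \<phi> k2"
    using True by (auto simp: Sg_def)
  have kc: "k1 \<in> carrier H" "k2 \<in> carrier H" using k K_carr by auto
  have "s1 \<otimes> s2 = \<phi> (k1 \<otimes> k2)" using kc k by simp
  then have "pass e (s1 \<otimes> s2) = k1 \<otimes> k2" using True kc phii_phi[of "k1 \<otimes> k2"] by (simp add: pass_def)
  moreover have "pass e s1 = k1" "pass e s2 = k2" using True kc k by (simp_all add: pass_def)
  ultimately show ?thesis by simp
next
  case False
  assume s: "s1 \<in> Sg e" "s2 \<in> Sg e"
  then have "s1 \<in> carrier H" "s2 \<in> carrier H" using Sg_carr by auto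
  then show ?thesis using False by (simp add: pass_def)
qed

lemma phi_one [simp]: "\<phi> \<one> = \<one>"
  using phi_group_hom by (simp add: group_hom.hom_one)

lemma pass_one [simp]: "pass e \<one> = \<one>"
  using phii_phi[of \<one>] by (simp add: pass_def)

fun actH :: "'h \<Rightarrow> ('h \<times> bool) list \<Rightarrow> 'h \<Rightarrow> 'h nform" where
  "actH h [] t = ([], h \<otimes> t)"
| "actH h ((c, e) # xs) t =
    (let c' = rp e (h \<otimes> c); r = actH (pass e (inv c' \<otimes> (h \<otimes> c))) xs t in ((c', e) # fst r, snd r))"

definition actT :: "bool \<Rightarrow> 'h nform \<Rightarrow> 'h nform" where
  "actT e x = (case fst x of
      (c, e') # rest \<Rightarrow> (if c = \<one> \<and> e' = (\<not> e) then (rest, snd x) else ((\<one>, e) # fst x, snd x))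
    | [] \<Rightarrow> ([(\<one>, e)], snd x))"

fun actl :: "'h + bool \<Rightarrow> 'h nform \<Rightarrow> 'h nform" where
  "actl (Inl h) x = actH h (fst x) (snd x)"
| "actl (Inr e) x = actT e x"

definition actw :: "'h hnn_word \<Rightarrow> 'h nform \<Rightarrow> 'h nform" where
  "actw w x = foldr actl w x"

fun okl :: "('h \<times> bool) list \<Rightarrow> bool" where
  "okl [] = True"
| "okl ((c, e) # xs) = (c \<in> carrier H \<and> rp e c = c \<and> okl xs \<and>
      (case xs of [] \<Rightarrow> True | (c', e') # _ \<Rightarrow> (c' = \<one> \<longrightarrow> e' = e)))"

definition valid :: "'h nform \<Rightarrow> bool" where
  "valid x \<longleftrightarrow> okl (fst x) \<and> snd x \<in> carrier H"

lemma actH_Cons_fst: "fst (actH h ((c, e) # xs) t) = (rp e (h \<otimes> c), e) # fst (actH (pass e (inv (rp e (h \<otimes> c)) \<otimes> (h \<otimes> c))) xs t)"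
  by (simp add: Let_def)

lemma actH_Cons_snd: "snd (actH h ((c, e) # xs) t) = snd (actH (pass e (inv (rp e (h \<otimes> c)) \<otimes> (h \<otimes> c))) xs t)"
  by (simp add: Let_def)

lemma actH_shape: "map snd (fst (actH h xs t)) = map snd xs"
  by (induction h xs t rule: actH.induct) (simp_all add: Let_def)

lemma okl_carr: "okl xs \<Longrightarrow> (c, e) \<in> set xs \<Longrightarrow> c \<in> carrier H"
  by (induction xs rule: okl.induct) auto

lemma rp_mem: "h \<in> carrier H \<Longrightarrow> inv (rp e h) \<otimes> h \<in> Sg e"
  by (rule H.crep_mem[OF Sg_sub])

lemma rp_carr: "h \<in> carrier H \<Longrightarrow> rp e h \<in> carrier H"
  by (rule H.crep_carr[OF Sg_sub])

lemma actH_valid: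
  "okl xs \<Longrightarrow> h \<in> carrier H \<Longrightarrow> t \<in> carrier H \<Longrightarrow> okl (fst (actH h xs t)) \<and> snd (actH h xs t) \<in> carrier H"
proof (induction h xs t rule: actH.induct)
  case (1 h t)
  then show ?case by simp
next
  case (2 h c e xs t)
  define c' where "c' = rp e (h \<otimes> c)"
  define p where "p = pass e (inv c' \<otimes> (h \<otimes> c))"
  have c: "c \<in> carrier H" using "2.prems" by simp
  have hc: "h \<otimes> c \<in> carrier H" using c "2.prems" by simp
  have c'c: "c' \<in> carrier H" using hc by (simp add: c'_def rp_carr)
  have s: "inv c' \<otimes> (h \<otimes> c) \<in> Sg e" using hc by (simp add: c'_def rp_mem)
  have pm: "p \<in> Sg (\<not> e)" using s by (simp add: p_def pass_mem)
  have p: "p \<in> carrier H" using pm Sg_carr by blast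
  have IH: "okl (fst (actH p xs t)) \<and> snd (actH p xs t) \<in> carrier H"
    using "2.IH"[OF c'_def] "2.prems" p by (simp add: p_def)
  have idem: "rp e c' = c'" using hc by (simp add: c'_def H.crep_idem[OF Sg_sub])
  have pinch: "case fst (actH p xs t) of [] \<Rightarrow> True | (c2', e2) # _ \<Rightarrow> (c2' = \<one> \<longrightarrow> e2 = e)"
  proof (cases xs)
    case Nil
    then show ?thesis by simp
  next
    case (Cons a r)
    obtain c2 e2 where a: "a = (c2, e2)" by (cases a)
    have c2: "c2 \<in> carrier H" and rc2: "rp e2 c2 = c2" and pc2: "c2 = \<one> \<longrightarrow> e2 = e"
      using "2.prems"(1) Cons a by auto
    have "rp e2 (p \<otimes> c2) = \<one> \<longrightarrow> e2 = e"
    proof (rule impI, rule ccontr)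
      assume r1: "rp e2 (p \<otimes> c2) = \<one>" and ne: "e2 \<noteq> e"
      then have Se: "Sg e2 = Sg (\<not> e)" by (cases e2) auto
      have "p \<otimes> c2 \<in> Sg e2" using r1 H.crep_one_iff[OF Sg_sub, of "p \<otimes> c2" e2] p c2 by simp
      moreover have "inv p \<in> Sg e2" using pm Se Sg_sub subgroup.m_inv_closed by metis
      ultimately have "inv p \<otimes> (p \<otimes> c2) \<in> Sg e2" using Sg_sub subgroup.m_closed by metis
      then have "c2 \<in> Sg e2" using p c2 by simp
      then have "rp e2 c2 = \<one>" using H.crep_one_iff[OF Sg_sub c2] by simp
      then have "c2 = \<one>" using rc2 by simp
      then show False using pc2 ne by simp
    qed
    then show ?thesis using Cons a by (simp add: Let_def)
  qed
  have e1: "fst (actH h ((c, e) # xs) t) = (c', e) # fst (actH p xs t)"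
    by (simp add: Let_def c'_def p_def)
  have e2: "snd (actH h ((c, e) # xs) t) = snd (actH p xs t)"
    by (simp add: Let_def c'_def p_def)
  show ?case unfolding e1 e2 using IH c'c idem pinch by simp
qed

end

context hnn begin

lemma Sg_one [simp]: "\<one> \<in> Sg e"
  using subgroup.one_closed[OF Sg_sub] .

lemma rp_in: "h \<in> Sg e \<Longrightarrow> rp e h = \<one>"
  by (simp add: crep_def)

lemma okl_Cons_D: "okl ((c, e) # xs) \<Longrightarrow> okl xs" by simp

lemma okl_carr_all: "okl xs \<Longrightarrow> \<forall>p\<in>set xs. fst p \<in> carrier H"
  using okl_carr by fastforce

lemma actH_comp:
  "\<forall>p\<in>set xs. fst p \<in> carrier H \<Longrightarrow> g \<in> carrier H \<Longrightarrow> h \<in> carrier H \<Longrightarrow> t \<in> carrier H \<Longrightarrow>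
   actH g (fst (actH h xs t)) (snd (actH h xs t)) = actH (g \<otimes> h) xs t"
proof (induction xs arbitrary: g h)
  case Nil
  then show ?case by (simp add: H.m_assoc)
next
  case (Cons a xs)
  obtain c e where a: "a = (c, e)" by (cases a)
  have c: "c \<in> carrier H" using Cons.prems a by simp
  have g: "g \<in> carrier H" and h: "h \<in> carrier H" and t: "t \<in> carrier H" using Cons.prems by auto
  define c1 where "c1 = rp e (h \<otimes> c)"
  define s1 where "s1 = inv c1 \<otimes> (h \<otimes> c)"
  define c2 where "c2 = rp e (g \<otimes> c1)"
  define s2 where "s2 = inv c2 \<otimes> (g \<otimes> c1)"
  define s3 where "s3 = inv c2 \<otimes> (g \<otimes> h \<otimes> c)"
  have c1: "c1 \<in> carrier H" using c h by (simp add: c1_def rp_carr)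
  have c2: "c2 \<in> carrier H" using c1 g by (simp add: c2_def rp_carr)
  have s1: "s1 \<in> Sg e" using c h by (simp add: s1_def c1_def rp_mem)
  have s2: "s2 \<in> Sg e" using c1 g by (simp add: s2_def c2_def rp_mem)
  have c3: "rp e (g \<otimes> h \<otimes> c) = c2"
  proof -
    have "inv (g \<otimes> c1) \<otimes> (g \<otimes> h \<otimes> c) = s1"
      using g h c c1 by (simp add: s1_def H.m_assoc H.inv_mult_group)
    then have "rp e (g \<otimes> c1) = rp e (g \<otimes> h \<otimes> c)"
      using H.crep_eq[OF Sg_sub, of "g \<otimes> c1" "g \<otimes> h \<otimes> c" e] s1 g h c c1 by simp
    then show ?thesis by (simp add: c2_def)
  qed
  have s3: "s3 = s2 \<otimes> s1"
    using g h c c1 c2 by (simp add: s1_def s2_def s3_def H.m_assoc)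
  have p3: "pass e s3 = pass e s2 \<otimes> pass e s1" using s3 s1 s2 by (simp add: pass_mult)
  have IH: "actH (pass e s2) (fst (actH (pass e s1) xs t)) (snd (actH (pass e s1) xs t))
      = actH (pass e s2 \<otimes> pass e s1) xs t"
    using Cons.IH Cons.prems s1 s2 pass_carr by simp
  have L: "actH h (a # xs) t = ((c1, e) # fst (actH (pass e s1) xs t), snd (actH (pass e s1) xs t))"
    by (simp add: a Let_def c1_def s1_def)
  have R: "actH (g \<otimes> h) (a # xs) t = ((c2, e) # fst (actH (pass e s3) xs t), snd (actH (pass e s3) xs t))"
    by (simp add: a Let_def c3 s3_def)
  show ?case unfolding L R
    by (simp add: Let_def c2_def[symmetric] s2_def[symmetric] IH p3)
qed

lemma actH_one: "okl xs \<Longrightarrow> t \<in> carrier H \<Longrightarrow> actH \<one> xs t = (xs, t)"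
proof (induction xs)
  case Nil
  then show ?case by simp
next
  case (Cons a xs)
  obtain c e where a: "a = (c, e)" by (cases a)
  have c: "c \<in> carrier H" and rc: "rp e c = c" using Cons.prems a by auto
  have "okl xs" using Cons.prems a by simp
  then show ?case using Cons.IH Cons.prems c rc by (simp add: a Let_def)
qed

lemma valid_actH: "valid x \<Longrightarrow> h \<in> carrier H \<Longrightarrow> valid (actH h (fst x) (snd x))"
  using actH_valid by (simp add: valid_def)

lemma valid_actT: "valid x \<Longrightarrow> valid (actT e x)"
proof -
  assume v: "valid x"
  obtain xs t where x: "x = (xs, t)" by (cases x)
  show ?thesis
  proof (cases xs)
    case Nil
    then show ?thesis using v x by (simp add: actT_def valid_def H.crep_one_iff[OF Sg_sub])
  next
    case (Cons a rest)
    obtain c e' where a: "a = (c, e')" by (cases a)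
    show ?thesis
    proof (cases "c = \<one> \<and> e' = (\<not> e)")
      case True
      then show ?thesis using v x Cons a by (simp add: actT_def valid_def)
    next
      case False
      then show ?thesis using v x Cons a
        by (auto simp: actT_def valid_def H.crep_one_iff[OF Sg_sub])
    qed
  qed
qed

lemma actT_inv: "valid x \<Longrightarrow> actT e (actT (\<not> e) x) = x"
proof -
  assume v: "valid x"
  obtain xs t where x: "x = (xs, t)" by (cases x)
  show ?thesis
  proof (cases xs)
    case Nil
    then show ?thesis using x by (simp add: actT_def)
  next
    case (Cons a rest)
    obtain c e' where a: "a = (c, e')" by (cases a)
    show ?thesis
    proof (cases "c = \<one> \<and> e' = e")
      case True
      have "actT (\<not> e) x = (rest, t)" using True x Cons a by (simp add: actT_def)
      moreover have "actT e (rest, t) = ((\<one>, e) # rest, t)"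
      proof (cases rest)
        case Nil
        then show ?thesis by (simp add: actT_def)
      next
        case (Cons b r)
        obtain c2 e2 where b: "b = (c2, e2)" by (cases b)
        have "c2 = \<one> \<longrightarrow> e2 = e'" using v x \<open>xs = a # rest\<close> a Cons b by (simp add: valid_def)
        then show ?thesis using Cons b True by (auto simp: actT_def)
      qed
      ultimately show ?thesis using True x Cons a by simp
    next
      case False
      then show ?thesis using x Cons a by (auto simp: actT_def)
    qed
  qed
qed

lemma actT_conj:
  assumes v: "valid x" and k: "k \<in> K"
  shows "actT True (actH k (fst (actT False x)) (snd (actT False x))) = actH (\<phi> k) (fst x) (snd x)"
proof -
  obtain xs t where x: "x = (xs, t)" by (cases x)
  have kc: "k \<in> carrier H" using k K_carr by blast
  have rK: "rp False k = \<one>" using k by (intro rp_in) (simp add: Sg_def)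
  have rpK: "rp True (\<phi> k) = \<one>" using k by (intro rp_in) (simp add: Sg_def)
  show ?thesis
  proof (cases "\<exists>rest. xs = (\<one>, True) # rest")
    case True
    then obtain rest where xs: "xs = (\<one>, True) # rest" by blast
    have A: "actT False x = (rest, t)" using x xs by (simp add: actT_def)
    have B: "actH (\<phi> k) xs t = ((\<one>, True) # fst (actH k rest t), snd (actH k rest t))"
      using xs rpK kc by (simp add: Let_def pass_def)
    have C: "actT True (actH k rest t) = ((\<one>, True) # fst (actH k rest t), snd (actH k rest t))"
    proof (cases rest)
      case Nil
      then show ?thesis by (simp add: actT_def)
    next
      case (Cons b r)
      obtain c2 e2 where b: "b = (c2, e2)" by (cases b)
      have c2: "c2 \<in> carrier H" and rc2: "rp e2 c2 = c2" and p2: "c2 = \<one> \<longrightarrow> e2 = True"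
        using v x xs Cons b by (auto simp: valid_def)
      have "\<not> (rp e2 (k \<otimes> c2) = \<one> \<and> e2 = False)"
      proof
        assume a: "rp e2 (k \<otimes> c2) = \<one> \<and> e2 = False"
        then have "rp False (k \<otimes> c2) = \<one>" by (cases e2) auto
        then have "k \<otimes> c2 \<in> Sg False" using H.crep_one_iff[OF Sg_sub, of "k \<otimes> c2" False] kc c2 by simp
        then have "k \<otimes> c2 \<in> K" by (simp add: Sg_def)
        then have "inv k \<otimes> (k \<otimes> c2) \<in> K" using k K by (simp add: subgroup.m_closed subgroup.m_inv_closed)
        then have "c2 \<in> K" using kc c2 by simp
        then have "rp False c2 = \<one>" by (intro rp_in) (simp add: Sg_def)
        then have "rp e2 c2 = \<one>" using a by (cases e2) auto
        then show False using rc2 p2 a by simp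
      qed
      then show ?thesis using Cons b by (auto simp: actT_def Let_def)
    qed
    show ?thesis using A B C x by simp
  next
    case False
    note nf = this
    have A: "actT False x = ((\<one>, False) # xs, t)"
    proof (cases xs)
      case Nil
      then show ?thesis using x by (simp add: actT_def)
    next
      case (Cons b r)
      obtain c2 e2 where b: "b = (c2, e2)" by (cases b)
      have "\<not> (c2 = \<one> \<and> e2 = True)" using nf Cons b by auto
      then show ?thesis using x Cons b by (simp add: actT_def)
    qed
    have B: "actH k ((\<one>, False) # xs) t = ((\<one>, False) # fst (actH (\<phi> k) xs t), snd (actH (\<phi> k) xs t))"
      using rK kc by (simp add: Let_def pass_def)
    show ?thesis using A B x by (simp add: actT_def)
  qed
qed

end

context hnn begin

lemmas rel_trans' [trans] = rel_trans

lemma actw_Nil [simp]: "actw [] x = x" by (simp add: actw_def)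
lemma actw_Cons [simp]: "actw (a # w) x = actl a (actw w x)" by (simp add: actw_def)
lemma actw_append: "actw (u @ v) x = actw u (actw v x)" by (simp add: actw_def)

lemma valid_actl: "[a] \<in> W \<Longrightarrow> valid x \<Longrightarrow> valid (actl a x)"
  by (cases a) (auto intro: valid_actH valid_actT)

lemma valid_actw: "w \<in> W \<Longrightarrow> valid x \<Longrightarrow> valid (actw w x)"
proof (induction w)
  case (Cons a w)
  then have "[a] \<in> W" "w \<in> W" using W_simps(4)[of "[a]" w] by auto
  then show ?case using Cons by (simp add: valid_actl)
qed simp

lemma actw_frame:
  assumes "u @ v \<in> W" "valid z" "\<And>z'. valid z' \<Longrightarrow> actw l z' = actw r z'"
  shows "actw (u @ l @ v) z = actw (u @ r @ v) z"
proof -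
  have "valid (actw v z)" using assms valid_actw by simp
  then show ?thesis using assms by (simp add: actw_append)
qed

lemma actw_step:
  assumes st: "step x y" and xW: "x \<in> W" and vz: "valid z"
  shows "actw x z = actw y z"
  using st
proof cases
  case (step_mult g h u v)
  show ?thesis unfolding step_mult(1,2)
  proof (rule actw_frame)
    show "u @ v \<in> W" using step_mult xW by simp
    show "valid z" by (rule vz)
    fix z' assume "valid z'"
    then have "okl (fst z')" "snd z' \<in> carrier H" by (auto simp: valid_def)
    then show "actw [Inl g, Inl h] z' = actw [Inl (g \<otimes> h)] z'"
      using step_mult actH_comp[OF okl_carr_all] by simp
  qed
next
  case (step_one u v)
  have "actw (u @ [Inl \<one>] @ v) z = actw (u @ [] @ v) z"
  proof (rule actw_frame)
    show "u @ v \<in> W" using step_one xW by simp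
    show "valid z" by (rule vz)
    fix z' assume "valid z'"
    then show "actw [Inl \<one>] z' = actw [] z'"
      using actH_one by (simp add: valid_def)
  qed
  then show ?thesis using step_one by simp
next
  case (t_tinv u v)
  have "actw (u @ [Inr True, Inr False] @ v) z = actw (u @ [] @ v) z"
  proof (rule actw_frame)
    show "u @ v \<in> W" using t_tinv xW by simp
    show "valid z" by (rule vz)
    fix z' assume "valid z'"
    then show "actw [Inr True, Inr False] z' = actw [] z'"
      using actT_inv[of z' True] by simp
  qed
  then show ?thesis using t_tinv by simp
next
  case (tinv_t u v)
  have "actw (u @ [Inr False, Inr True] @ v) z = actw (u @ [] @ v) z"
  proof (rule actw_frame)
    show "u @ v \<in> W" using tinv_t xW by simp
    show "valid z" by (rule vz)
    fix z' assume "valid z'"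
    then show "actw [Inr False, Inr True] z' = actw [] z'"
      using actT_inv[of z' False] by simp
  qed
  then show ?thesis using tinv_t by simp
next
  case (step_conj k u v)
  show ?thesis unfolding step_conj(1,2)
  proof (rule actw_frame)
    show "u @ v \<in> W" using step_conj xW by simp
    show "valid z" by (rule vz)
    fix z' assume "valid z'"
    then show "actw [Inr True, Inl k, Inr False] z' = actw [Inl (\<phi> k)] z'"
      using actT_conj step_conj by simp
  qed
qed

lemma actw_rel: "u \<bowtie> v \<Longrightarrow> valid z \<Longrightarrow> actw u z = actw v z"
proof -
  assume uv: "u \<bowtie> v" and z: "valid z"
  have u: "u \<in> W" and ss: "SS\<^sup>*\<^sup>* u v" using uv by (auto simp: rel_iff)
  have "y \<in> W \<and> actw u z = actw y z" if "SS\<^sup>*\<^sup>* u y" for y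
    using that
  proof (induction rule: rtranclp_induct)
    case base
    then show ?case using u by simp
  next
    case (step y y')
    then have y: "y \<in> W" and e: "actw u z = actw y z" by auto
    from step.hyps(2) show ?case
    proof
      assume "step y y'"
      then show ?thesis using y e z actw_step step_W by metis
    next
      assume "step\<inverse>\<inverse> y y'"
      then have s: "step y' y" by simp
      then have "y' \<in> W" using y step_W by blast
      then show ?thesis using s e z actw_step by metis
    qed
  qed
  then show ?thesis using ss by blast
qed

definition x0 :: "'h nform" where "x0 = ([], \<one>)"

lemma valid_x0 [simp]: "valid x0" by (simp add: x0_def valid_def)

definition word :: "'h nform \<Rightarrow> 'h hnn_word" where
  "word x = concat (map (\<lambda>(c, e). [Inl c, Inr e]) (fst x)) @ [Inl (snd x)]"

lemma word_Cons: "word ((c, e) # xs, t) = [Inl c, Inr e] @ word (xs, t)"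
  by (simp add: word_def)

lemma word_Nil: "word ([], t) = [Inl t]"
  by (simp add: word_def)

lemma word_W: "okl xs \<Longrightarrow> t \<in> carrier H \<Longrightarrow> word (xs, t) \<in> W"
  by (induction xs) (auto simp: word_Cons word_Nil)

lemma R_mult: "g \<in> carrier H \<Longrightarrow> h \<in> carrier H \<Longrightarrow> [Inl g, Inl h] \<bowtie> [Inl (g \<otimes> h)]"
  using step_rel[OF hnn_step.step_mult[of g H h K \<phi> "[]" "[]"]] by simp

lemma R_one: "[Inl \<one>] \<bowtie> []"
  using step_rel[OF hnn_step.step_one[of H K \<phi> "[]" "[]"]] by simp

lemma R_tt: "[Inr e, Inr (\<not> e)] \<bowtie> []"
  using step_rel[OF hnn_step.t_tinv[of H K \<phi> "[]" "[]"]] step_rel[OF hnn_step.tinv_t[of H K \<phi> "[]" "[]"]]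
  by (cases e) auto

lemma R_swapT: "k \<in> K \<Longrightarrow> [Inl (\<phi> k), Inr True] \<bowtie> [Inr True, Inl k]"
proof -
  assume k: "k \<in> K"
  have "[Inr True, Inl k] \<bowtie> [Inr True, Inl k] @ [Inr False, Inr True] @ []"
    using rel_sym[OF step_rel[OF hnn_step.tinv_t[of H K \<phi> "[Inr True, Inl k]" "[]"]]] k K_carr
    by simp
  also have "[Inr True, Inl k] @ [Inr False, Inr True] @ [] \<bowtie> [Inl (\<phi> k), Inr True]"
    using step_rel[OF hnn_step.step_conj[OF k, of H \<phi> "[]" "[Inr True]"]] k K_carr by simp
  finally show ?thesis by (rule rel_sym)
qed

lemma R_swapF: "k \<in> K \<Longrightarrow> [Inl k, Inr False] \<bowtie> [Inr False, Inl (\<phi> k)]"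
proof -
  assume k: "k \<in> K"
  have "[Inl k, Inr False] \<bowtie> [] @ [Inr False, Inr True] @ [Inl k, Inr False]"
    using rel_sym[OF step_rel[OF hnn_step.tinv_t[of H K \<phi> "[]" "[Inl k, Inr False]"]]] k K_carr
    by simp
  also have "[] @ [Inr False, Inr True] @ [Inl k, Inr False] \<bowtie> [Inr False, Inl (\<phi> k)]"
    using step_rel[OF hnn_step.step_conj[OF k, of H \<phi> "[Inr False]" "[]"]] k K_carr by simp
  finally show ?thesis .
qed

lemma R_pass: "s \<in> Sg e \<Longrightarrow> [Inl s, Inr e] \<bowtie> [Inr e, Inl (pass e s)]"
proof (cases e)
  case True
  assume s: "s \<in> Sg e"
  then have "phii s \<in> K" "\<phi> (phii s) = s" using True phi_img_K by (auto simp: Sg_def)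
  then show ?thesis using R_swapT[of "phii s"] True by (simp add: pass_def)
next
  case False
  assume s: "s \<in> Sg e"
  then show ?thesis using R_swapF[of s] False by (simp add: pass_def Sg_def)
qed

end

context hnn begin

lemma R_one_ins: "w \<in> W \<Longrightarrow> Inl \<one> # w \<bowtie> w"
  using rel_app_right[OF R_one, of w] by simp

lemma convH:
  "okl xs \<Longrightarrow> h \<in> carrier H \<Longrightarrow> t \<in> carrier H \<Longrightarrow> Inl h # word (xs, t) \<bowtie> word (actH h xs t)"
proof (induction xs arbitrary: h)
  case Nil
  then show ?case using R_mult[of h t] by (simp add: word_Nil)
next
  case (Cons a xs)
  obtain c e where a: "a = (c, e)" by (cases a)
  have c: "c \<in> carrier H" and oxs: "okl xs" using Cons.prems a by auto
  have h: "h \<in> carrier H" and t: "t \<in> carrier H" using Cons.prems by auto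
  define c' where "c' = rp e (h \<otimes> c)"
  define s where "s = inv c' \<otimes> (h \<otimes> c)"
  define p where "p = pass e s"
  have c': "c' \<in> carrier H" using h c by (simp add: c'_def rp_carr)
  have s: "s \<in> Sg e" using h c by (simp add: s_def c'_def rp_mem)
  have sc: "s \<in> carrier H" using s Sg_carr by blast
  have p: "p \<in> carrier H" using s by (simp add: p_def pass_carr)
  have hc: "h \<otimes> c = c' \<otimes> s" using h c c' by (simp add: s_def)
  define rest where "rest = word (xs, t)"
  have rW: "rest \<in> W" using oxs t by (simp add: rest_def word_W)
  have "Inl h # word (a # xs, t) = [Inl h, Inl c] @ (Inr e # rest)"
    by (simp add: a word_Cons rest_def)
  also have "[Inl h, Inl c] @ (Inr e # rest) \<bowtie> [Inl (h \<otimes> c)] @ (Inr e # rest)"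
    using R_mult[OF h c] rW by (intro rel_app_right) auto
  also have "[Inl (h \<otimes> c)] @ (Inr e # rest) = [Inl (c' \<otimes> s)] @ (Inr e # rest)" by (simp add: hc)
  also have "[Inl (c' \<otimes> s)] @ (Inr e # rest) \<bowtie> [Inl c', Inl s] @ (Inr e # rest)"
    using rel_sym[OF R_mult[OF c' sc]] rW by (intro rel_app_right) auto
  also have "[Inl c', Inl s] @ (Inr e # rest) = [Inl c'] @ [Inl s, Inr e] @ rest" by simp
  also have "[Inl c'] @ [Inl s, Inr e] @ rest \<bowtie> [Inl c'] @ [Inr e, Inl p] @ rest"
    using R_pass[OF s] rW c' by (intro rel_app_left rel_app_right) (auto simp: p_def)
  also have "[Inl c'] @ [Inr e, Inl p] @ rest = [Inl c', Inr e] @ (Inl p # rest)" by simp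
  also have "[Inl c', Inr e] @ (Inl p # rest) \<bowtie> [Inl c', Inr e] @ word (actH p xs t)"
    using Cons.IH[OF oxs p t] c' by (intro rel_app_left) (auto simp: rest_def)
  also have "[Inl c', Inr e] @ word (actH p xs t) = word (actH h (a # xs) t)"
    by (simp add: a Let_def c'_def[symmetric] s_def[symmetric] p_def[symmetric] word_def)
  finally show ?case .
qed

lemma convT:
  assumes v: "valid x" shows "Inr e # word x \<bowtie> word (actT e x)"
proof -
  obtain xs t where x: "x = (xs, t)" by (cases x)
  have o: "okl xs" and t: "t \<in> carrier H" using v x by (auto simp: valid_def)
  have wW: "word x \<in> W" using o t x by (simp add: word_W)
  have ins: "Inr e # word x \<bowtie> word ((\<one>, e) # xs, t)"
    using rel_sym[OF R_one_ins[of "Inr e # word x"]] wW x by (simp add: word_Cons)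
  show ?thesis
  proof (cases xs)
    case Nil
    then show ?thesis using ins x by (simp add: actT_def)
  next
    case (Cons a rest)
    obtain c e' where a: "a = (c, e')" by (cases a)
    show ?thesis
    proof (cases "c = \<one> \<and> e' = (\<not> e)")
      case True
      have oR: "okl rest" using o Cons a by simp
      have rW: "word (rest, t) \<in> W" using oR t by (simp add: word_W)
      have "Inr e # word x = [Inr e] @ [Inl \<one>] @ (Inr (\<not> e) # word (rest, t))"
        using x Cons a True by (simp add: word_Cons)
      also have "[Inr e] @ [Inl \<one>] @ (Inr (\<not> e) # word (rest, t)) \<bowtie> [Inr e] @ [] @ (Inr (\<not> e) # word (rest, t))"
        using R_one rW by (intro rel_app_left rel_app_right) auto
      also have "[Inr e] @ [] @ (Inr (\<not> e) # word (rest, t)) = [Inr e, Inr (\<not> e)] @ word (rest, t)" by simp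
      also have "[Inr e, Inr (\<not> e)] @ word (rest, t) \<bowtie> [] @ word (rest, t)"
        using R_tt rW by (intro rel_app_right) auto
      also have "[] @ word (rest, t) = word (actT e x)"
        using x Cons a True by (simp add: actT_def)
      finally show ?thesis .
    next
      case False
      then have "actT e x = ((\<one>, e) # xs, t)" using x Cons a
        by (cases e; cases e') (auto simp: actT_def)
      then show ?thesis using ins by simp
    qed
  qed
qed

lemma conv: "w \<in> W \<Longrightarrow> w \<bowtie> word (actw w x0)"
proof (induction w)
  case Nil
  then show ?case using rel_sym[OF R_one] by (simp add: x0_def word_Nil)
next
  case (Cons a w)
  have aW: "[a] \<in> W" and wW: "w \<in> W" using Cons.prems W_simps(4)[of "[a]" w] by auto
  define y where "y = actw w x0"
  have vy: "valid y" using wW by (simp add: y_def valid_actw)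
  have "a # w \<bowtie> [a] @ word y" using Cons.IH[OF wW] aW by (simp add: y_def rel_app_left[of _ _ "[a]", simplified])
  also have "[a] @ word y \<bowtie> word (actw (a # w) x0)"
  proof (cases a)
    case (Inl h)
    then have "h \<in> carrier H" using aW by simp
    then show ?thesis using convH[of "fst y" h "snd y"] vy Inl by (simp add: y_def valid_def)
  next
    case (Inr e)
    then show ?thesis using convT[OF vy, of e] by (simp add: y_def)
  qed
  finally show ?case .
qed

lemma actH_tail:
  "\<forall>p\<in>set xs. fst p \<in> carrier H \<Longrightarrow> h \<in> carrier H \<Longrightarrow> t \<in> carrier H \<Longrightarrow> g \<in> carrier H \<Longrightarrow>
   actH h xs (t \<otimes> g) = (fst (actH h xs t), snd (actH h xs t) \<otimes> g)"
proof (induction xs arbitrary: h)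
  case Nil
  then show ?case by (simp add: H.m_assoc)
next
  case (Cons a xs)
  obtain c e where a: "a = (c, e)" by (cases a)
  have c: "c \<in> carrier H" using Cons.prems a by simp
  have "pass e (inv (rp e (h \<otimes> c)) \<otimes> (h \<otimes> c)) \<in> carrier H"
    using Cons.prems c by (simp add: rp_mem pass_carr)
  then show ?case using Cons by (simp add: a Let_def)
qed

lemma actl_tail: "[a] \<in> W \<Longrightarrow> valid y \<Longrightarrow> g \<in> carrier H \<Longrightarrow>
   actl a (fst y, snd y \<otimes> g) = (fst (actl a y), snd (actl a y) \<otimes> g)"
proof (cases a)
  case (Inl h)
  assume "[a] \<in> W" "valid y" "g \<in> carrier H"
  then show ?thesis using Inl actH_tail[OF okl_carr_all] by (simp add: valid_def)
next
  case (Inr e)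
  then show ?thesis by (auto simp: actT_def split: list.splits)
qed

lemma actw_tail: "w \<in> W \<Longrightarrow> valid x \<Longrightarrow> g \<in> carrier H \<Longrightarrow>
   actw w (fst x, snd x \<otimes> g) = (fst (actw w x), snd (actw w x) \<otimes> g)"
proof (induction w)
  case Nil
  then show ?case by simp
next
  case (Cons a w)
  have aW: "[a] \<in> W" and wW: "w \<in> W" using Cons.prems W_simps(4)[of "[a]" w] by auto
  have v: "valid (actw w x)" using wW Cons.prems by (simp add: valid_actw)
  show ?case using Cons.IH[OF wW Cons.prems(2,3)] actl_tail[OF aW v Cons.prems(3)] by simp
qed

lemma cls_act: "u \<in> W \<Longrightarrow> v \<in> W \<Longrightarrow> cls u = cls v \<Longrightarrow> actw u x0 = actw v x0"
  using cls_eq_iff actw_rel valid_x0 by blast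

end

context hnn begin

abbreviation io where "io h \<equiv> cls [Inl h]"
abbreviation TT where "TT \<equiv> cls [Inr True]"
abbreviation Ti where "Ti \<equiv> cls [Inr False]"

lemma io_carr [simp]: "h \<in> carrier H \<Longrightarrow> io h \<in> carrier G" by simp
lemma TT_carr [simp]: "TT \<in> carrier G" by simp
lemma Ti_carr [simp]: "Ti \<in> carrier G" by simp

lemma cls_Cons: "a # w \<in> W \<Longrightarrow> cls (a # w) = cls [a] \<otimes>\<^bsub>G\<^esub> cls w"
proof -
  assume "a # w \<in> W"
  then have "[a] \<in> W" "w \<in> W" using W_simps(4)[of "[a]" w] by auto
  then show ?thesis by (simp add: mult_cls)
qed

lemma io_mult: "g \<in> carrier H \<Longrightarrow> h \<in> carrier H \<Longrightarrow> io (g \<otimes> h) = io g \<otimes>\<^bsub>G\<^esub> io h"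
  using cls_eq[OF R_mult[of g h]] by (simp add: mult_cls)

lemma io_one: "io \<one> = \<one>\<^bsub>G\<^esub>"
  using R_one by (simp add: one_G cls_eq)

lemma TT_Ti: "TT \<otimes>\<^bsub>G\<^esub> Ti = \<one>\<^bsub>G\<^esub>"
  using R_tt[of True] by (simp add: mult_cls one_G cls_eq)

lemma Ti_TT: "Ti \<otimes>\<^bsub>G\<^esub> TT = \<one>\<^bsub>G\<^esub>"
  using R_tt[of False] by (simp add: mult_cls one_G cls_eq)

lemma TT_io: "k \<in> K \<Longrightarrow> TT \<otimes>\<^bsub>G\<^esub> io k = io (\<phi> k) \<otimes>\<^bsub>G\<^esub> TT"
  using R_swapT[of k] K_carr[of k] by (simp add: mult_cls cls_eq)

lemma io_Ti: "k \<in> K \<Longrightarrow> io k \<otimes>\<^bsub>G\<^esub> Ti = Ti \<otimes>\<^bsub>G\<^esub> io (\<phi> k)"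
  using R_swapF[of k] K_carr[of k] by (simp add: mult_cls cls_eq)

lemma io_inj: "g \<in> carrier H \<Longrightarrow> h \<in> carrier H \<Longrightarrow> io g = io h \<Longrightarrow> g = h"
proof -
  assume g: "g \<in> carrier H" and h: "h \<in> carrier H" and e: "io g = io h"
  have "actw [Inl g] x0 = actw [Inl h] x0" using cls_act[of "[Inl g]" "[Inl h]"] g h e by simp
  then show ?thesis using g h by (simp add: x0_def)
qed

lemma fact2:
  assumes x: "x \<in> carrier H" and y: "y \<in> carrier H"
    and e: "TT \<otimes>\<^bsub>G\<^esub> io x \<otimes>\<^bsub>G\<^esub> Ti = io y"
  shows "x \<in> K"
proof -
  have "cls [Inr True, Inl x, Inr False] = io y" using e x by (simp add: mult_cls)
  then have "actw [Inr True, Inl x, Inr False] x0 = actw [Inl y] x0"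
    using cls_act[of "[Inr True, Inl x, Inr False]" "[Inl y]"] x y by simp
  moreover have "fst (actw [Inr True, Inl x, Inr False] x0) =
      (if rp False x = \<one> then [] else [(\<one>, True), (rp False x, False)])"
    using x by (simp add: x0_def actT_def Let_def)
  moreover have "fst (actw [Inl y] x0) = []" by (simp add: x0_def)
  ultimately have "rp False x = \<one>" by (metis list.distinct(1))
  then have "x \<in> Sg False" using H.crep_one_iff[OF Sg_sub x] by simp
  then show ?thesis by (simp add: Sg_def)
qed

lemma Sg_ne: "K \<noteq> carrier H \<Longrightarrow> \<not> carrier H \<subseteq> Sg e"
proof
  assume ne: "K \<noteq> carrier H" and sub: "carrier H \<subseteq> Sg e"
  have "carrier H \<subseteq> K"
  proof (cases e)
    case True
    show ?thesis
    proof
      fix h assume h: "h \<in> carrier H"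
      then have "\<phi> h \<in> \<phi> ` K" using sub True by (auto simp: Sg_def)
      then obtain k where k: "k \<in> K" "\<phi> h = \<phi> k" by auto
      then have "h = k" using h K_carr phi_inj by (auto dest: inj_onD)
      then show "h \<in> K" using k by simp
    qed
  next
    case False
    then show ?thesis using sub by (simp add: Sg_def)
  qed
  then show False using ne K_sub by blast
qed

lemma fact1:
  assumes ne: "K \<noteq> carrier H" and z: "z \<in> carrier G"
    and comm: "\<And>h. h \<in> carrier H \<Longrightarrow> z \<otimes>\<^bsub>G\<^esub> io h = io h \<otimes>\<^bsub>G\<^esub> z"
  shows "\<exists>c\<in>carrier H. z = io c"
proof -
  obtain w where w: "w \<in> W" and zw: "z = cls w" using z by (auto simp: carrier_G)
  obtain xs t0 where y: "actw w x0 = (xs, t0)" by (cases "actw w x0")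
  have vy: "valid (xs, t0)" using valid_actw[OF w valid_x0] y by simp
  have ok: "okl xs" and t0: "t0 \<in> carrier H" using vy by (auto simp: valid_def)
  have key: "actH h xs t0 = (xs, t0 \<otimes> h)" if h: "h \<in> carrier H" for h
  proof -
    have "cls (w @ [Inl h]) = cls (Inl h # w)" using comm[OF h] zw w h by (simp add: mult_cls)
    then have "actw (w @ [Inl h]) x0 = actw (Inl h # w) x0" using w h by (intro cls_act) auto
    moreover have "actw (w @ [Inl h]) x0 = (xs, t0 \<otimes> h)"
    proof -
      have "actw (w @ [Inl h]) x0 = actw w (fst x0, snd x0 \<otimes> h)"
        using h by (simp add: actw_append x0_def)
      also have "\<dots> = (xs, t0 \<otimes> h)" using actw_tail[OF w valid_x0 h] y by simp
      finally show ?thesis .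
    qed
    moreover have "actw (Inl h # w) x0 = actH h xs t0" using y by simp
    ultimately show ?thesis by simp
  qed
  have "xs = []"
  proof (rule ccontr)
    assume "xs \<noteq> []"
    then obtain c e r where xs: "xs = (c, e) # r" by (cases xs) auto
    have c: "c \<in> carrier H" and rc: "rp e c = c" using ok xs by auto
    have fix_c: "rp e (h \<otimes> c) = c" if h: "h \<in> carrier H" for h
      using key[OF h] xs by (simp add: Let_def)
    have "carrier H \<subseteq> Sg e"
    proof
      fix h assume h: "h \<in> carrier H"
      define h' where "h' = c \<otimes> h \<otimes> inv c"
      have h': "h' \<in> carrier H" using h c by (simp add: h'_def)
      have "rp e c = rp e (h' \<otimes> c)" using fix_c[OF h'] rc by simp
      then have "inv c \<otimes> (h' \<otimes> c) \<in> Sg e" using H.crep_eqD[OF Sg_sub c] h' c by simp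
      then show "h \<in> Sg e" using h c by (simp add: h'_def H.m_assoc)
    qed
    then show False using Sg_ne[OF ne] by blast
  qed
  then have "w \<bowtie> [Inl t0]" using conv[OF w] y by (simp add: word_Nil)
  then have "z = io t0" using zw by (simp add: cls_eq)
  then show ?thesis using t0 by blast
qed

end

context hnn begin

definition okpair :: "('h \<Rightarrow> 'h) \<Rightarrow> 'h \<Rightarrow> bool" where
  "okpair \<delta> a \<longleftrightarrow> (\<forall>h\<in>carrier H. \<delta> h \<in> carrier H) \<and>
     (\<forall>g\<in>carrier H. \<forall>h\<in>carrier H. \<delta> (g \<otimes> h) = \<delta> g \<otimes> \<delta> h) \<and> \<delta> \<one> = \<one> \<and>
     (\<forall>k\<in>K. \<delta> k \<in> K) \<and> a \<in> carrier H \<and> (\<forall>k\<in>K. \<phi> (\<delta> k) = inv a \<otimes> \<delta> (\<phi> k) \<otimes> a)"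

definition M :: "('h \<Rightarrow> 'h) \<Rightarrow> 'h \<Rightarrow> 'h hnn_word \<Rightarrow> 'h hnn_word" where
  "M \<delta> a w = concat (map (hnn_letter_map H \<delta> a) w)"

lemma M_Nil [simp]: "M \<delta> a [] = []" by (simp add: M_def)
lemma M_Cons: "M \<delta> a (l # w) = M \<delta> a [l] @ M \<delta> a w" by (simp add: M_def)
lemma M_append: "M \<delta> a (u @ v) = M \<delta> a u @ M \<delta> a v" by (simp add: M_def)
lemma M_Inl [simp]: "M \<delta> a [Inl h] = [Inl (\<delta> h)]" by (simp add: M_def hnn_letter_map_def)
lemma M_T [simp]: "M \<delta> a [Inr True] = [Inl a, Inr True]" by (simp add: M_def hnn_letter_map_def)
lemma M_Ti [simp]: "M \<delta> a [Inr False] = [Inr False, Inl (inv a)]" by (simp add: M_def hnn_letter_map_def)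

lemma okpairD:
  assumes "okpair \<delta> a"
  shows "\<And>h. h \<in> carrier H \<Longrightarrow> \<delta> h \<in> carrier H"
    "\<And>g h. g \<in> carrier H \<Longrightarrow> h \<in> carrier H \<Longrightarrow> \<delta> (g \<otimes> h) = \<delta> g \<otimes> \<delta> h"
    "\<delta> \<one> = \<one>" "\<And>k. k \<in> K \<Longrightarrow> \<delta> k \<in> K" "a \<in> carrier H"
    "\<And>k. k \<in> K \<Longrightarrow> \<phi> (\<delta> k) = inv a \<otimes> \<delta> (\<phi> k) \<otimes> a"
  using assms by (auto simp: okpair_def)

lemma okpair_inv: "okpair \<delta> a \<Longrightarrow> h \<in> carrier H \<Longrightarrow> \<delta> (inv h) = inv (\<delta> h)"
proof -
  assume o: "okpair \<delta> a" and h: "h \<in> carrier H"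
  have "\<delta> (inv h) \<otimes> \<delta> h = \<one>" using okpairD(2)[OF o, of "inv h" h] okpairD(3)[OF o] h by simp
  then show ?thesis using okpairD(1)[OF o] h by (simp add: H.inv_equality)
qed

lemma M_W: "okpair \<delta> a \<Longrightarrow> w \<in> W \<Longrightarrow> M \<delta> a w \<in> W"
proof (induction w)
  case (Cons l w)
  then have lw: "[l] \<in> W" "w \<in> W" using W_simps(4)[of "[l]" w] by auto
  have "M \<delta> a [l] \<in> W" using lw okpairD[OF Cons.prems(1)] by (cases l) (auto, case_tac b, auto)
  then show ?case using Cons lw by (subst M_Cons) simp
qed simp

lemma rel_frame: "l \<bowtie> r \<Longrightarrow> u \<in> W \<Longrightarrow> v \<in> W \<Longrightarrow> u @ l @ v \<bowtie> u @ r @ v"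
  by (intro rel_app_left rel_app_right) (auto dest: rel_W)

lemma M_frame: "okpair \<delta> a \<Longrightarrow> u \<in> W \<Longrightarrow> v \<in> W \<Longrightarrow> M \<delta> a l \<bowtie> M \<delta> a r \<Longrightarrow>
   M \<delta> a (u @ l @ v) \<bowtie> M \<delta> a (u @ r @ v)"
  unfolding M_append by (rule rel_frame) (auto simp: M_W)

lemma M_step:
  assumes o: "okpair \<delta> a" and st: "step x y" and xW: "x \<in> W"
  shows "M \<delta> a x \<bowtie> M \<delta> a y"
  using st
proof cases
  case (step_mult g h u v)
  have "M \<delta> a [Inl g, Inl h] \<bowtie> M \<delta> a [Inl (g \<otimes> h)]"
    using R_mult[of "\<delta> g" "\<delta> h"] okpairD[OF o] step_mult by (simp add: M_def hnn_letter_map_def)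
  then show ?thesis unfolding step_mult(1,2) by (rule M_frame[OF o, rotated 2]) (use step_mult xW in simp)+
next
  case (step_one u v)
  have "M \<delta> a [Inl \<one>] \<bowtie> M \<delta> a []"
    using R_one okpairD[OF o] by simp
  then have "M \<delta> a (u @ [Inl \<one>] @ v) \<bowtie> M \<delta> a (u @ [] @ v)" by (rule M_frame[OF o, rotated 2]) (use step_one xW in simp)+
  then show ?thesis using step_one by simp
next
  case (t_tinv u v)
  have a: "a \<in> carrier H" using okpairD[OF o] by simp
  have "[Inl a] @ [Inr True, Inr False] @ [Inl (inv a)] \<bowtie> [Inl a] @ [] @ [Inl (inv a)]"
    using R_tt[of True] a by (intro rel_frame) auto
  also have "[Inl a] @ [] @ [Inl (inv a)] \<bowtie> [Inl \<one>]" using R_mult[of a "inv a"] a by simp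
  also have "[Inl \<one>] \<bowtie> []" by (rule R_one)
  finally have "M \<delta> a [Inr True, Inr False] \<bowtie> M \<delta> a []" by (simp add: M_def hnn_letter_map_def)
  then have "M \<delta> a (u @ [Inr True, Inr False] @ v) \<bowtie> M \<delta> a (u @ [] @ v)" by (rule M_frame[OF o, rotated 2]) (use t_tinv xW in simp)+
  then show ?thesis using t_tinv by simp
next
  case (tinv_t u v)
  have a: "a \<in> carrier H" using okpairD[OF o] by simp
  have "[Inr False] @ [Inl (inv a), Inl a] @ [Inr True] \<bowtie> [Inr False] @ [Inl \<one>] @ [Inr True]"
    using R_mult[of "inv a" a] a by (intro rel_frame) auto
  also have "[Inr False] @ [Inl \<one>] @ [Inr True] \<bowtie> [Inr False] @ [] @ [Inr True]"
    using R_one by (intro rel_frame) auto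
  also have "[Inr False] @ [] @ [Inr True] \<bowtie> []" using R_tt[of False] by simp
  finally have "M \<delta> a [Inr False, Inr True] \<bowtie> M \<delta> a []" by (simp add: M_def hnn_letter_map_def)
  then have "M \<delta> a (u @ [Inr False, Inr True] @ v) \<bowtie> M \<delta> a (u @ [] @ v)" by (rule M_frame[OF o, rotated 2]) (use tinv_t xW in simp)+
  then show ?thesis using tinv_t by simp
next
  case (step_conj k u v)
  have a: "a \<in> carrier H" using okpairD[OF o] by simp
  have dk: "\<delta> k \<in> K" using okpairD(4)[OF o step_conj(3)] .
  have dkc: "\<delta> k \<in> carrier H" using dk K_carr by blast
  have pk: "\<phi> k \<in> carrier H" using step_conj K_carr by simp
  have dpk: "\<delta> (\<phi> k) \<in> carrier H" using okpairD(1)[OF o pk] .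
  have "[Inl a] @ [Inr True, Inl (\<delta> k), Inr False] @ [Inl (inv a)] \<bowtie> [Inl a] @ [Inl (\<phi> (\<delta> k))] @ [Inl (inv a)]"
    using step_rel[OF hnn_step.step_conj[OF dk, of H \<phi> "[]" "[]"]] dkc a by (intro rel_frame) auto
  also have "[Inl a] @ [Inl (\<phi> (\<delta> k))] @ [Inl (inv a)] = [Inl a, Inl (\<phi> (\<delta> k))] @ [Inl (inv a)]" by simp
  also have "[Inl a, Inl (\<phi> (\<delta> k))] @ [Inl (inv a)] \<bowtie> [Inl (a \<otimes> \<phi> (\<delta> k))] @ [Inl (inv a)]"
    using R_mult[of a "\<phi> (\<delta> k)"] a dkc by (intro rel_app_right) auto
  also have "[Inl (a \<otimes> \<phi> (\<delta> k))] @ [Inl (inv a)] \<bowtie> [Inl (a \<otimes> \<phi> (\<delta> k) \<otimes> inv a)]"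
    using R_mult[of "a \<otimes> \<phi> (\<delta> k)" "inv a"] a dkc by simp
  also have "a \<otimes> \<phi> (\<delta> k) \<otimes> inv a = \<delta> (\<phi> k)"
    using okpairD(6)[OF o step_conj(3)] a dpk by (simp add: H.m_assoc)
  finally have "M \<delta> a [Inr True, Inl k, Inr False] \<bowtie> M \<delta> a [Inl (\<phi> k)]"
    by (simp add: M_def hnn_letter_map_def)
  then show ?thesis unfolding step_conj(1,2) by (rule M_frame[OF o, rotated 2]) (use step_conj xW in simp)+
qed

lemma M_rel: "okpair \<delta> a \<Longrightarrow> u \<bowtie> v \<Longrightarrow> M \<delta> a u \<bowtie> M \<delta> a v"
proof -
  assume o: "okpair \<delta> a" and uv: "u \<bowtie> v"
  have u: "u \<in> W" and ss: "SS\<^sup>*\<^sup>* u v" using uv by (auto simp: rel_iff)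
  have "y \<in> W \<and> M \<delta> a u \<bowtie> M \<delta> a y" if "SS\<^sup>*\<^sup>* u y" for y
    using that
  proof (induction rule: rtranclp_induct)
    case base
    then show ?case using u o M_W rel_refl by simp
  next
    case (step y y')
    then have y: "y \<in> W" and e: "M \<delta> a u \<bowtie> M \<delta> a y" by auto
    from step.hyps(2) show ?case
    proof
      assume s: "step y y'"
      then have "y' \<in> W" using y step_W by blast
      then show ?thesis using s y e M_step[OF o s y] rel_trans by blast
    next
      assume "step\<inverse>\<inverse> y y'"
      then have s: "step y' y" by simp
      then have y': "y' \<in> W" using y step_W by blast
      then show ?thesis using e rel_sym[OF M_step[OF o s y']] rel_trans by blast
    qed
  qed
  then show ?thesis using ss by blast
qed

abbreviation alpha where "alpha \<delta> a \<equiv> hnn_alpha H K \<phi> \<delta> a"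

lemma alpha_cls: "okpair \<delta> a \<Longrightarrow> w \<in> W \<Longrightarrow> alpha \<delta> a (cls w) = cls (M \<delta> a w)"
proof -
  assume o: "okpair \<delta> a" and w: "w \<in> W"
  have "M \<delta> a (SOME u. u \<in> cls w) \<bowtie> M \<delta> a w"
    using M_rel[OF o rel_sym[OF some_cls[OF w]]] .
  then have "cls (M \<delta> a (SOME u. u \<in> cls w)) = cls (M \<delta> a w)" by (rule cls_eq)
  then show ?thesis using w by (simp add: hnn_alpha_def M_def)
qed

lemma alpha_ext: "alpha \<delta> a \<in> extensional (carrier G)"
  by (simp add: hnn_alpha_def)

lemma alpha_hom: "okpair \<delta> a \<Longrightarrow> alpha \<delta> a \<in> hom G G"
proof -
  assume o: "okpair \<delta> a"
  show ?thesis
  proof (rule homI)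
    fix x assume "x \<in> carrier G"
    then obtain w where "w \<in> W" "x = cls w" by (auto simp: carrier_G)
    then show "alpha \<delta> a x \<in> carrier G" using o M_W alpha_cls by simp
  next
    fix x y assume "x \<in> carrier G" "y \<in> carrier G"
    then obtain u v where uv: "u \<in> W" "v \<in> W" "x = cls u" "y = cls v" by (auto simp: carrier_G)
    then show "alpha \<delta> a (x \<otimes>\<^bsub>G\<^esub> y) = alpha \<delta> a x \<otimes>\<^bsub>G\<^esub> alpha \<delta> a y"
      using o M_W alpha_cls by (simp add: mult_cls M_append)
  qed
qed

end

context hnn begin

lemma MM_letter:
  assumes o1: "okpair \<delta>1 a1" and o2: "okpair \<delta>2 a2"
    and d3: "\<And>h. h \<in> carrier H \<Longrightarrow> \<delta>3 h = \<delta>2 (\<delta>1 h)" and a3: "a3 = \<delta>2 a1 \<otimes> a2"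
    and l: "[l] \<in> W"
  shows "M \<delta>2 a2 (M \<delta>1 a1 [l]) \<bowtie> M \<delta>3 a3 [l]"
proof (cases l)
  case (Inl h)
  then have h: "h \<in> carrier H" using l by simp
  have "[Inl (\<delta>2 (\<delta>1 h))] \<in> W" using h okpairD(1)[OF o1] okpairD(1)[OF o2] by simp
  then show ?thesis using Inl d3[OF h] by (simp add: rel_refl)
next
  case (Inr b)
  have a1: "a1 \<in> carrier H" and a2: "a2 \<in> carrier H" using okpairD(5)[OF o1] okpairD(5)[OF o2] .
  have da1: "\<delta>2 a1 \<in> carrier H" using okpairD(1)[OF o2 a1] .
  show ?thesis
  proof (cases b)
    case True
    have "M \<delta>2 a2 (M \<delta>1 a1 [l]) = [Inl (\<delta>2 a1), Inl a2] @ [Inr True]"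
      using Inr True by (simp add: M_def hnn_letter_map_def)
    also have "[Inl (\<delta>2 a1), Inl a2] @ [Inr True] \<bowtie> [Inl (\<delta>2 a1 \<otimes> a2)] @ [Inr True]"
      using R_mult[OF da1 a2] by (intro rel_app_right) auto
    also have "[Inl (\<delta>2 a1 \<otimes> a2)] @ [Inr True] = M \<delta>3 a3 [l]" using Inr True a3 by simp
    finally show ?thesis .
  next
    case False
    have ia: "\<delta>2 (inv a1) = inv (\<delta>2 a1)" using okpair_inv[OF o2 a1] .
    have "M \<delta>2 a2 (M \<delta>1 a1 [l]) = [Inr False] @ [Inl (inv a2), Inl (inv (\<delta>2 a1))]"
      using Inr False ia by (simp add: M_def hnn_letter_map_def)
    also have "[Inr False] @ [Inl (inv a2), Inl (inv (\<delta>2 a1))] \<bowtie> [Inr False] @ [Inl (inv a2 \<otimes> inv (\<delta>2 a1))]"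
      using R_mult[of "inv a2" "inv (\<delta>2 a1)"] da1 a2 by (intro rel_app_left) auto
    also have "[Inr False] @ [Inl (inv a2 \<otimes> inv (\<delta>2 a1))] = M \<delta>3 a3 [l]"
      using Inr False a3 da1 a2 by (simp add: H.inv_mult_group)
    finally show ?thesis .
  qed
qed

lemma MM:
  assumes o1: "okpair \<delta>1 a1" and o2: "okpair \<delta>2 a2"
    and d3: "\<And>h. h \<in> carrier H \<Longrightarrow> \<delta>3 h = \<delta>2 (\<delta>1 h)" and a3: "a3 = \<delta>2 a1 \<otimes> a2"
  shows "w \<in> W \<Longrightarrow> M \<delta>2 a2 (M \<delta>1 a1 w) \<bowtie> M \<delta>3 a3 w"
proof (induction w)
  case Nil
  then show ?case by (simp add: rel_refl)
next
  case (Cons l w)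
  then have lw: "[l] \<in> W" "w \<in> W" using W_simps(4)[of "[l]" w] by auto
  have "M \<delta>2 a2 (M \<delta>1 a1 (l # w)) = M \<delta>2 a2 (M \<delta>1 a1 [l]) @ M \<delta>2 a2 (M \<delta>1 a1 w)"
    by (simp add: M_Cons[of _ _ l w] M_append)
  also have "\<dots> \<bowtie> M \<delta>3 a3 [l] @ M \<delta>3 a3 w"
    using MM_letter[OF o1 o2 d3 a3 lw(1)] Cons.IH[OF lw(2)] by (rule rel_app)
  also have "M \<delta>3 a3 [l] @ M \<delta>3 a3 w = M \<delta>3 a3 (l # w)" by (simp add: M_Cons[of _ _ l w])
  finally show ?case .
qed

lemma alpha_comp:
  assumes o1: "okpair \<delta>1 a1" and o2: "okpair \<delta>2 a2" and o3: "okpair \<delta>3 a3"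
    and d3: "\<And>h. h \<in> carrier H \<Longrightarrow> \<delta>3 h = \<delta>2 (\<delta>1 h)" and a3: "a3 = \<delta>2 a1 \<otimes> a2"
    and C: "C \<in> carrier G"
  shows "alpha \<delta>2 a2 (alpha \<delta>1 a1 C) = alpha \<delta>3 a3 C"
proof -
  obtain w where w: "w \<in> W" and Cw: "C = cls w" using C by (auto simp: carrier_G)
  have "alpha \<delta>2 a2 (alpha \<delta>1 a1 C) = cls (M \<delta>2 a2 (M \<delta>1 a1 w))"
    using Cw w o1 o2 M_W by (simp add: alpha_cls)
  also have "\<dots> = cls (M \<delta>3 a3 w)" using MM[OF o1 o2 d3 a3 w] by (rule cls_eq)
  also have "\<dots> = alpha \<delta>3 a3 C" using Cw w o3 by (simp add: alpha_cls)
  finally show ?thesis .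
qed

lemma M_id:
  assumes o: "okpair \<delta> \<one>" and d: "\<And>h. h \<in> carrier H \<Longrightarrow> \<delta> h = h"
  shows "w \<in> W \<Longrightarrow> M \<delta> \<one> w \<bowtie> w"
proof (induction w)
  case Nil
  then show ?case by (simp add: rel_refl)
next
  case (Cons l w)
  then have lw: "[l] \<in> W" "w \<in> W" using W_simps(4)[of "[l]" w] by auto
  have L: "M \<delta> \<one> [l] \<bowtie> [l]"
  proof (cases l)
    case (Inl h)
    then show ?thesis using lw d by (simp add: rel_refl)
  next
    case (Inr b)
    then show ?thesis
    proof (cases b)
      case True
      then show ?thesis using Inr R_one_ins[of "[Inr True]"] by simp
    next
      case False
      have "[Inr False] @ [Inl \<one>] @ [] \<bowtie> [Inr False] @ [] @ []" using R_one by (intro rel_frame) auto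
      then show ?thesis using Inr False by simp
    qed
  qed
  have "M \<delta> \<one> (l # w) = M \<delta> \<one> [l] @ M \<delta> \<one> w" by (simp add: M_Cons[of _ _ l w])
  also have "\<dots> \<bowtie> [l] @ w" using L Cons.IH[OF lw(2)] by (rule rel_app)
  finally show ?case by simp
qed

lemma alpha_id:
  assumes o: "okpair \<delta> \<one>" and d: "\<And>h. h \<in> carrier H \<Longrightarrow> \<delta> h = h" and C: "C \<in> carrier G"
  shows "alpha \<delta> \<one> C = C"
proof -
  obtain w where w: "w \<in> W" and Cw: "C = cls w" using C by (auto simp: carrier_G)
  show ?thesis using Cw w o alpha_cls cls_eq[OF M_id[OF o d w]] by simp
qed

lemma alpha_conj:
  assumes o: "okpair \<delta> a" and g: "g \<in> carrier G"
    and L: "\<And>l. [l] \<in> W \<Longrightarrow> cls (M \<delta> a [l]) = inv\<^bsub>G\<^esub> g \<otimes>\<^bsub>G\<^esub> cls [l] \<otimes>\<^bsub>G\<^esub> g"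
    and C: "C \<in> carrier G"
  shows "alpha \<delta> a C = inv\<^bsub>G\<^esub> g \<otimes>\<^bsub>G\<^esub> C \<otimes>\<^bsub>G\<^esub> g"
proof -
  interpret Gp: group G by (rule group_G)
  obtain w where w: "w \<in> W" and Cw: "C = cls w" using C by (auto simp: carrier_G)
  have "cls (M \<delta> a w) = inv\<^bsub>G\<^esub> g \<otimes>\<^bsub>G\<^esub> cls w \<otimes>\<^bsub>G\<^esub> g" using w
  proof (induction w)
    case Nil
    then show ?case using g by (simp add: one_G[symmetric])
  next
    case (Cons l w)
    then have lw: "[l] \<in> W" "w \<in> W" using W_simps(4)[of "[l]" w] by auto
    have MW: "M \<delta> a [l] \<in> W" "M \<delta> a w \<in> W" using lw o M_W by auto
    have "cls (M \<delta> a (l # w)) = cls (M \<delta> a [l]) \<otimes>\<^bsub>G\<^esub> cls (M \<delta> a w)"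
      using MW by (simp add: M_Cons[of _ _ l w] mult_cls)
    also have "\<dots> = (inv\<^bsub>G\<^esub> g \<otimes>\<^bsub>G\<^esub> cls [l] \<otimes>\<^bsub>G\<^esub> g) \<otimes>\<^bsub>G\<^esub> (inv\<^bsub>G\<^esub> g \<otimes>\<^bsub>G\<^esub> cls w \<otimes>\<^bsub>G\<^esub> g)"
      using L[OF lw(1)] Cons.IH[OF lw(2)] by simp
    also have "\<dots> = inv\<^bsub>G\<^esub> g \<otimes>\<^bsub>G\<^esub> (cls [l] \<otimes>\<^bsub>G\<^esub> cls w) \<otimes>\<^bsub>G\<^esub> g"
      using g lw by (simp add: Gp.m_assoc)
    also have "cls [l] \<otimes>\<^bsub>G\<^esub> cls w = cls (l # w)" using lw by (simp add: mult_cls)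
    finally show ?case .
  qed
  then show ?thesis using Cw w o by (simp add: alpha_cls)
qed

end

context hnn begin

lemma norm_eq: "b \<in> normalizer H K \<longleftrightarrow> b \<in> carrier H \<and> b <# K #> inv b = K"
  using K_sub by (simp add: normalizer_def stabilizer_def)

lemma normI:
  assumes b: "b \<in> carrier H" and c1: "\<And>k. k \<in> K \<Longrightarrow> b \<otimes> k \<otimes> inv b \<in> K"
    and c2: "\<And>k. k \<in> K \<Longrightarrow> inv b \<otimes> k \<otimes> b \<in> K"
  shows "b \<in> normalizer H K"
proof -
  have "b <# K #> inv b = K"
  proof
    show "b <# K #> inv b \<subseteq> K" using c1 by (auto simp: l_coset_def r_coset_def)
    show "K \<subseteq> b <# K #> inv b"
    proof
      fix k assume k: "k \<in> K"
      have kc: "k \<in> carrier H" using k K_carr by blast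
      have "k = b \<otimes> (inv b \<otimes> k \<otimes> b) \<otimes> inv b" using b kc by (simp add: H.m_assoc)
      then show "k \<in> b <# K #> inv b" using c2[OF k] by (auto simp: l_coset_def r_coset_def)
    qed
  qed
  then show ?thesis using b by (simp add: norm_eq)
qed

lemma normD:
  assumes "b \<in> normalizer H K"
  shows "b \<in> carrier H" "\<And>k. k \<in> K \<Longrightarrow> inv b \<otimes> k \<otimes> b \<in> K" "\<And>k. k \<in> K \<Longrightarrow> b \<otimes> k \<otimes> inv b \<in> K"
proof -
  have b: "b \<in> carrier H" and e: "b <# K #> inv b = K" using assms by (auto simp: norm_eq)
  show "b \<in> carrier H" by (rule b)
  fix k assume k: "k \<in> K"
  show "b \<otimes> k \<otimes> inv b \<in> K" using k e by (auto simp: l_coset_def r_coset_def)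
  have "k \<in> b <# K #> inv b" using k e by simp
  then obtain k' where k': "k' \<in> K" "k = b \<otimes> k' \<otimes> inv b" by (auto simp: l_coset_def r_coset_def)
  then have "inv b \<otimes> k \<otimes> b = k'" using b K_carr by (simp add: H.m_assoc)
  then show "inv b \<otimes> k \<otimes> b \<in> K" using k' by simp
qed

abbreviation ab where "ab b \<equiv> inv b \<otimes> \<phi> b"
abbreviation A where "A b \<equiv> alpha (conjg H b) (ab b)"

lemma phi_inv: "x \<in> carrier H \<Longrightarrow> \<phi> (inv x) = inv (\<phi> x)"
  using phi_group_hom by (simp add: group_hom.hom_inv)

lemma okpair_conjg: "b \<in> normalizer H K \<Longrightarrow> okpair (conjg H b) (ab b)"
proof -
  assume bN: "b \<in> normalizer H K"
  note b = normD[OF bN]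
  have pk: "\<phi> (inv b \<otimes> k \<otimes> b) = inv (ab b) \<otimes> (inv b \<otimes> \<phi> k \<otimes> b) \<otimes> ab b" if k: "k \<in> K" for k
  proof -
    have kc: "k \<in> carrier H" using k K_carr by blast
    show ?thesis using b(1) kc by (simp add: phi_inv H.m_assoc H.inv_mult_group)
  qed
  show ?thesis unfolding okpair_def conjg_def
    using b pk by (auto simp: H.m_assoc)
qed

end

context hnn begin

lemma N_sub: "subgroup (normalizer H K) H"
  using H.normalizer_imp_subgroup[OF K_sub] .

lemma N_mult: "b \<in> normalizer H K \<Longrightarrow> b' \<in> normalizer H K \<Longrightarrow> b \<otimes> b' \<in> normalizer H K"
  using subgroup.m_closed[OF N_sub] .

lemma N_inv: "b \<in> normalizer H K \<Longrightarrow> inv b \<in> normalizer H K"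
  using subgroup.m_inv_closed[OF N_sub] .

lemma N_one: "\<one> \<in> normalizer H K"
  using subgroup.one_closed[OF N_sub] .

lemma A_comp:
  assumes b: "b \<in> normalizer H K" and b': "b' \<in> normalizer H K" and C: "C \<in> carrier G"
  shows "A b' (A b C) = A (b \<otimes> b') C"
proof (rule alpha_comp[OF okpair_conjg[OF b] okpair_conjg[OF b'] okpair_conjg[OF N_mult[OF b b']] _ _ C])
  have bc: "b \<in> carrier H" "b' \<in> carrier H" using normD(1) b b' by auto
  fix h assume h: "h \<in> carrier H"
  show "conjg H (b \<otimes> b') h = conjg H b' (conjg H b h)"
    using bc h by (simp add: conjg_def H.m_assoc H.inv_mult_group)
next
  have bc: "b \<in> carrier H" "b' \<in> carrier H" using normD(1) b b' by auto
  show "ab (b \<otimes> b') = conjg H b' (ab b) \<otimes> ab b'"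
    using bc by (simp add: conjg_def H.m_assoc H.inv_mult_group)
qed

lemma A_one: "C \<in> carrier G \<Longrightarrow> A \<one> C = C"
proof -
  assume C: "C \<in> carrier G"
  have e: "ab \<one> = \<one>" by simp
  have o: "okpair (conjg H \<one>) \<one>" using okpair_conjg[OF N_one] by simp
  show ?thesis using alpha_id[OF o _ C] by (simp add: conjg_def)
qed

lemma A_iso: "b \<in> normalizer H K \<Longrightarrow> A b \<in> iso G G"
proof -
  assume b: "b \<in> normalizer H K"
  have bc: "b \<in> carrier H" using normD(1)[OF b] .
  have ib: "inv b \<in> normalizer H K" using N_inv[OF b] .
  have "group_isomorphisms G G (A b) (A (inv b))"
    unfolding group_isomorphisms_def
  proof (intro conjI ballI)
    show "A b \<in> hom G G" using alpha_hom[OF okpair_conjg[OF b]] .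
    show "A (inv b) \<in> hom G G" using alpha_hom[OF okpair_conjg[OF ib]] .
    fix x assume x: "x \<in> carrier G"
    show "A (inv b) (A b x) = x" using A_comp[OF b ib x] A_one[OF x] bc by simp
  next
    fix y assume y: "y \<in> carrier G"
    show "A b (A (inv b) y) = y" using A_comp[OF ib b y] A_one[OF y] bc by simp
  qed
  then show ?thesis by (rule group_isomorphisms_imp_iso)
qed

lemma A_Aut: "b \<in> normalizer H K \<Longrightarrow> A b \<in> carrier (Aut G)"
  using A_iso alpha_ext by (simp add: Aut_carrier_iff)

lemma A_mult: "b \<in> normalizer H K \<Longrightarrow> b' \<in> normalizer H K \<Longrightarrow> A b \<otimes>\<^bsub>Aut G\<^esub> A b' = A (b \<otimes> b')"
proof -
  assume b: "b \<in> normalizer H K" and b': "b' \<in> normalizer H K"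
  show ?thesis
  proof
    fix C
    show "(A b \<otimes>\<^bsub>Aut G\<^esub> A b') C = A (b \<otimes> b') C"
    proof (cases "C \<in> carrier G")
      case True
      then show ?thesis using A_comp[OF b b' True] by (simp add: Aut_mult)
    next
      case False
      then show ?thesis using alpha_ext[of "conjg H (b \<otimes> b')" "ab (b \<otimes> b')"]
        by (simp add: Aut_mult extensional_def)
    qed
  qed
qed

lemma chi2_eq: "chi2 H K \<phi> b = Inn G #>\<^bsub>Aut G\<^esub> A b"
  by (simp add: chi2_def)

lemma chi2_OutV: "b \<in> normalizer H K \<Longrightarrow> chi2 H K \<phi> b \<in> OutV H K \<phi>"
proof -
  assume b: "b \<in> normalizer H K"
  have bc: "b \<in> carrier H" using normD(1)[OF b] .
  have "b \<otimes> ab b \<otimes> inv (\<phi> b) = \<one>" using bc by (simp add: H.m_assoc)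
  moreover have "\<one> \<in> centralizer H (\<phi> ` K)"
    using K_carr by (auto simp: centralizer_def)
  ultimately show ?thesis using b bc unfolding OutV_def chi2_eq
    by (intro CollectI exI[of _ b] exI[of _ "ab b"]) simp
qed

lemma chi2_hom: "chi2 H K \<phi> \<in> hom (H\<lparr>carrier := normalizer H K\<rparr>) (Out G)"
proof -
  interpret Gp: group G by (rule group_G)
  interpret AG: group "Aut G" by (rule Aut_group) (rule group_G)
  interpret NI: normal "Inn G" "Aut G" by (rule Gp.Inn_normal)
  show ?thesis
  proof (rule homI)
    fix b assume "b \<in> carrier (H\<lparr>carrier := normalizer H K\<rparr>)"
    then have b: "b \<in> normalizer H K" by simp
    show "chi2 H K \<phi> b \<in> carrier (Out G)"
      using A_Aut[OF b] by (auto simp: Out_def carrier_FactGroup chi2_eq)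
  next
    fix b b' assume "b \<in> carrier (H\<lparr>carrier := normalizer H K\<rparr>)" "b' \<in> carrier (H\<lparr>carrier := normalizer H K\<rparr>)"
    then have b: "b \<in> normalizer H K" and b': "b' \<in> normalizer H K" by auto
    have "chi2 H K \<phi> (b \<otimes> b') = Inn G #>\<^bsub>Aut G\<^esub> (A b \<otimes>\<^bsub>Aut G\<^esub> A b')"
      by (simp add: chi2_eq A_mult[OF b b'])
    also have "\<dots> = (Inn G #>\<^bsub>Aut G\<^esub> A b) <#>\<^bsub>Aut G\<^esub> (Inn G #>\<^bsub>Aut G\<^esub> A b')"
      using NI.rcos_sum[OF A_Aut[OF b] A_Aut[OF b']] by simp
    finally show "chi2 H K \<phi> (b \<otimes>\<^bsub>H\<lparr>carrier := normalizer H K\<rparr>\<^esub> b') =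
        chi2 H K \<phi> b \<otimes>\<^bsub>Out G\<^esub> chi2 H K \<phi> b'"
      by (simp add: Out_def chi2_eq)
  qed
qed

end

context group begin

lemma gl1:
  assumes g: "g \<in> carrier G" and B: "B \<in> carrier G" and x: "x \<in> carrier G"
    and e: "inv g \<otimes> x \<otimes> g = inv B \<otimes> x \<otimes> B"
  shows "(g \<otimes> inv B) \<otimes> x = x \<otimes> (g \<otimes> inv B)"
proof -
  have "g \<otimes> (inv g \<otimes> x \<otimes> g) \<otimes> inv B = g \<otimes> (inv B \<otimes> x \<otimes> B) \<otimes> inv B" using e by simp
  then show ?thesis using g B x by (simp add: m_assoc)
qed

lemma gl2:
  assumes g: "g \<in> carrier G" and T: "T \<in> carrier G" and Y: "Y \<in> carrier G"
    and e: "Y \<otimes> T = inv g \<otimes> T \<otimes> g"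
  shows "T \<otimes> g \<otimes> inv T = g \<otimes> Y"
proof -
  have "g \<otimes> (Y \<otimes> T) \<otimes> inv T = g \<otimes> (inv g \<otimes> T \<otimes> g) \<otimes> inv T" using e by simp
  then show ?thesis using g T Y by (simp add: m_assoc)
qed

lemma central_inv:
  assumes c: "c \<in> carrier G" and h: "h \<in> carrier G" and e: "c \<otimes> h = h \<otimes> c"
  shows "inv c \<otimes> h = h \<otimes> inv c"
proof -
  have "inv c \<otimes> (c \<otimes> h) \<otimes> inv c = inv c \<otimes> (h \<otimes> c) \<otimes> inv c" using e by simp
  then show ?thesis using c h by (simp add: m_assoc)
qed

end

context hnn begin

lemma io_inv: "h \<in> carrier H \<Longrightarrow> inv\<^bsub>G\<^esub> (io h) = io (inv h)"
proof -
  interpret Gp: group G by (rule group_G)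
  assume h: "h \<in> carrier H"
  have "io (inv h) \<otimes>\<^bsub>G\<^esub> io h = \<one>\<^bsub>G\<^esub>" using h io_mult[of "inv h" h] io_one by simp
  then show ?thesis using h by (simp add: Gp.inv_equality)
qed

lemma Ti_inv: "inv\<^bsub>G\<^esub> TT = Ti"
proof -
  interpret Gp: group G by (rule group_G)
  show ?thesis using Ti_TT by (simp add: Gp.inv_equality)
qed

lemma TT_conj_K: "k \<in> K \<Longrightarrow> TT \<otimes>\<^bsub>G\<^esub> io k \<otimes>\<^bsub>G\<^esub> Ti = io (\<phi> k)"
proof -
  interpret Gp: group G by (rule group_G)
  assume k: "k \<in> K"
  have kc: "k \<in> carrier H" using k K_carr by blast
  have "TT \<otimes>\<^bsub>G\<^esub> io k \<otimes>\<^bsub>G\<^esub> Ti = io (\<phi> k) \<otimes>\<^bsub>G\<^esub> (TT \<otimes>\<^bsub>G\<^esub> Ti)"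
    using TT_io[OF k] kc by (simp add: Gp.m_assoc)
  then show ?thesis using TT_Ti kc by simp
qed

lemma A_io: "b \<in> normalizer H K \<Longrightarrow> h \<in> carrier H \<Longrightarrow> A b (io h) = io (inv b \<otimes> h \<otimes> b)"
  using alpha_cls[OF okpair_conjg] by (simp add: conjg_def)

lemma A_TT: "b \<in> normalizer H K \<Longrightarrow> A b TT = io (ab b) \<otimes>\<^bsub>G\<^esub> TT"
proof -
  assume b: "b \<in> normalizer H K"
  have bc: "b \<in> carrier H" using normD(1)[OF b] .
  show ?thesis using alpha_cls[OF okpair_conjg[OF b], of "[Inr True]"] bc by (simp add: mult_cls)
qed

lemma kernel_sub:
  assumes ne: "K \<noteq> carrier H" and b: "b \<in> normalizer H K" and Ab: "A b \<in> Inn G"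
  shows "b \<in> (center H \<inter> Fix H \<phi>) <#> K"
proof -
  interpret Gp: group G by (rule group_G)
  have bc: "b \<in> carrier H" using normD(1)[OF b] .
  obtain g where g: "g \<in> carrier G" and Ag: "A b = conjf G g" using Ab by (auto simp: Inn_conjf)
  have Ag': "A b C = inv\<^bsub>G\<^esub> g \<otimes>\<^bsub>G\<^esub> C \<otimes>\<^bsub>G\<^esub> g" if "C \<in> carrier G" for C
    using that Ag by (simp add: conjf_def)
  define B where "B = io b"
  have B: "B \<in> carrier G" using bc by (simp add: B_def)
  define z where "z = g \<otimes>\<^bsub>G\<^esub> inv\<^bsub>G\<^esub> B"
  have z: "z \<in> carrier G" using g B by (simp add: z_def)
  have comm: "z \<otimes>\<^bsub>G\<^esub> io h = io h \<otimes>\<^bsub>G\<^esub> z" if h: "h \<in> carrier H" for h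
  proof -
    have "inv\<^bsub>G\<^esub> g \<otimes>\<^bsub>G\<^esub> io h \<otimes>\<^bsub>G\<^esub> g = A b (io h)" using Ag' h by simp
    also have "\<dots> = io (inv b \<otimes> h \<otimes> b)" using A_io[OF b h] .
    also have "\<dots> = inv\<^bsub>G\<^esub> B \<otimes>\<^bsub>G\<^esub> io h \<otimes>\<^bsub>G\<^esub> B"
      using bc h by (simp add: io_mult io_inv B_def)
    finally show ?thesis using Gp.gl1[OF g B, of "io h"] h by (simp add: z_def)
  qed
  obtain c where c: "c \<in> carrier H" and zc: "z = io c" using fact1[OF ne z comm] by blast
  have gc: "g = io (c \<otimes> b)"
  proof -
    have "g = z \<otimes>\<^bsub>G\<^esub> B" using g B by (simp add: z_def Gp.m_assoc)
    then show ?thesis using zc c bc by (simp add: B_def io_mult)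
  qed
  have cent: "c \<otimes> h = h \<otimes> c" if h: "h \<in> carrier H" for h
  proof -
    have "io (c \<otimes> h) = io (h \<otimes> c)" using comm[OF h] zc c h by (simp add: io_mult)
    then show ?thesis using io_inj c h by simp
  qed
  have cb: "c \<otimes> b \<in> carrier H" using c bc by simp
  have abc: "ab b \<in> carrier H" using bc by simp
  have "io (ab b) \<otimes>\<^bsub>G\<^esub> TT = inv\<^bsub>G\<^esub> g \<otimes>\<^bsub>G\<^esub> TT \<otimes>\<^bsub>G\<^esub> g"
    using A_TT[OF b] Ag'[of TT] by simp
  then have "TT \<otimes>\<^bsub>G\<^esub> g \<otimes>\<^bsub>G\<^esub> inv\<^bsub>G\<^esub> TT = g \<otimes>\<^bsub>G\<^esub> io (ab b)"
    using Gp.gl2[OF g TT_carr, of "io (ab b)"] abc by simp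
  then have e1: "TT \<otimes>\<^bsub>G\<^esub> io (c \<otimes> b) \<otimes>\<^bsub>G\<^esub> Ti = io (c \<otimes> \<phi> b)"
    using gc cb abc bc c by (simp add: Ti_inv io_mult[symmetric] H.m_assoc)
  have cbK: "c \<otimes> b \<in> K" using fact2[OF cb _ e1] c bc by simp
  have "io (\<phi> (c \<otimes> b)) = io (c \<otimes> \<phi> b)" using TT_conj_K[OF cbK] e1 by simp
  then have "\<phi> (c \<otimes> b) = c \<otimes> \<phi> b" using io_inj cb c bc by simp
  then have "\<phi> c \<otimes> \<phi> b = c \<otimes> \<phi> b" using c bc by simp
  then have pc: "\<phi> c = c" using c bc by simp
  have ic: "inv c \<in> center H \<inter> Fix H \<phi>"
    using c cent H.central_inv[OF c] phi_inv[OF c] pc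
    by (auto simp: center_def centralizer_def Fix_def)
  have "b = inv c \<otimes> (c \<otimes> b)" using c bc by (simp add: H.m_assoc)
  then show ?thesis using ic cbK unfolding set_mult_def by blast
qed

end

context hnn begin

lemma kernel_sup:
  assumes j: "j \<in> center H \<inter> Fix H \<phi>" and k: "k \<in> K"
  shows "j \<otimes> k \<in> normalizer H K \<and> A (j \<otimes> k) \<in> Inn G"
proof -
  interpret Gp: group G by (rule group_G)
  have jc: "j \<in> carrier H" and jcom: "\<And>s. s \<in> carrier H \<Longrightarrow> j \<otimes> s = s \<otimes> j" and pj: "\<phi> j = j"
    using j by (auto simp: center_def centralizer_def Fix_def)
  have kc: "k \<in> carrier H" using k K_carr by blast
  define x where "x = j \<otimes> k"
  have xc: "x \<in> carrier H" using jc kc by (simp add: x_def)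
  have conjx: "inv x \<otimes> h \<otimes> x = inv k \<otimes> h \<otimes> k" if h: "h \<in> carrier H" for h
  proof -
    have "inv j \<otimes> h = h \<otimes> inv j" using H.central_inv[OF jc h jcom[OF h]] .
    then show ?thesis using jc kc h by (simp add: x_def H.m_assoc H.inv_mult_group)
  qed
  have conjx2: "x \<otimes> h \<otimes> inv x = k \<otimes> h \<otimes> inv k" if h: "h \<in> carrier H" for h
  proof -
    define y where "y = k \<otimes> h \<otimes> inv k"
    have y: "y \<in> carrier H" using kc h by (simp add: y_def)
    have "x \<otimes> h \<otimes> inv x = (j \<otimes> y) \<otimes> inv j"
      using jc kc h by (simp add: x_def y_def H.m_assoc H.inv_mult_group)
    also have "\<dots> = (y \<otimes> j) \<otimes> inv j" using jcom[OF y] by simp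
    also have "\<dots> = y" using y jc by (simp add: H.m_assoc)
    finally show ?thesis by (simp add: y_def)
  qed
  have KK: "k \<otimes> k1 \<otimes> inv k \<in> K" "inv k \<otimes> k1 \<otimes> k \<in> K" if "k1 \<in> K" for k1
    using that k K by (simp_all add: subgroup.m_closed subgroup.m_inv_closed)
  have xN: "x \<in> normalizer H K"
    using xc KK conjx conjx2 K_carr by (intro normI) auto
  have ax: "ab x = inv k \<otimes> \<phi> k"
  proof -
    have "inv j \<otimes> j = \<one>" using jc by simp
    then show ?thesis using jc kc pj by (simp add: x_def H.m_assoc H.inv_mult_group)
  qed
  have ik: "inv k \<in> K" using k K by (simp add: subgroup.m_inv_closed)
  have ikc: "inv k \<in> carrier H" using kc by simp
  have ioinv: "inv\<^bsub>G\<^esub> (io k) = io (inv k)" using io_inv[OF kc] .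
  have L: "cls (M (conjg H x) (ab x) [l]) = inv\<^bsub>G\<^esub> io k \<otimes>\<^bsub>G\<^esub> cls [l] \<otimes>\<^bsub>G\<^esub> io k" if l: "[l] \<in> W" for l
  proof (cases l)
    case (Inl h)
    then have h: "h \<in> carrier H" using l by simp
    show ?thesis using Inl h conjx[OF h] kc ikc by (simp add: conjg_def ioinv io_mult)
  next
    case (Inr b)
    show ?thesis
    proof (cases b)
      case True
      have pkc: "\<phi> k \<in> carrier H" using kc by simp
      have "cls (M (conjg H x) (ab x) [l]) = io (inv k \<otimes> \<phi> k) \<otimes>\<^bsub>G\<^esub> TT"
        using Inr True ax kc by (simp add: mult_cls)
      also have "\<dots> = io (inv k) \<otimes>\<^bsub>G\<^esub> io (\<phi> k) \<otimes>\<^bsub>G\<^esub> TT"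
        by (simp only: io_mult[OF ikc pkc])
      also have "\<dots> = io (inv k) \<otimes>\<^bsub>G\<^esub> (io (\<phi> k) \<otimes>\<^bsub>G\<^esub> TT)"
        using ikc pkc by (simp only: Gp.m_assoc io_carr TT_carr)
      also have "\<dots> = io (inv k) \<otimes>\<^bsub>G\<^esub> TT \<otimes>\<^bsub>G\<^esub> io k" using TT_io[OF k] kc by (simp add: Gp.m_assoc)
      finally show ?thesis using Inr True by (simp add: ioinv)
    next
      case False
      have iax: "inv (ab x) = inv (\<phi> k) \<otimes> k" using ax kc by (simp add: H.inv_mult_group)
      have pkc: "inv (\<phi> k) \<in> carrier H" using kc by simp
      have "cls (M (conjg H x) (ab x) [l]) = Ti \<otimes>\<^bsub>G\<^esub> io (inv (\<phi> k) \<otimes> k)"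
        using Inr False iax kc by (simp add: mult_cls)
      also have "\<dots> = Ti \<otimes>\<^bsub>G\<^esub> (io (inv (\<phi> k)) \<otimes>\<^bsub>G\<^esub> io k)"
        by (simp only: io_mult[OF pkc kc])
      also have "\<dots> = Ti \<otimes>\<^bsub>G\<^esub> io (\<phi> (inv k)) \<otimes>\<^bsub>G\<^esub> io k"
        using pkc kc by (simp add: Gp.m_assoc phi_inv)
      also have "\<dots> = io (inv k) \<otimes>\<^bsub>G\<^esub> Ti \<otimes>\<^bsub>G\<^esub> io k" using io_Ti[OF ik] by simp
      finally show ?thesis using Inr False by (simp add: ioinv)
    qed
  qed
  have "A x = conjf G (io k)"
  proof
    fix C
    show "A x C = conjf G (io k) C"
    proof (cases "C \<in> carrier G")
      case True
      then show ?thesis using alpha_conj[OF okpair_conjg[OF xN] _ L True] kc by (simp add: conjf_def)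
    next
      case False
      then show ?thesis using alpha_ext[of "conjg H x" "ab x"] by (simp add: conjf_def extensional_def)
    qed
  qed
  then have "A x \<in> Inn G" using kc by (auto simp: Inn_conjf)
  then show ?thesis using xN by (simp add: x_def)
qed

lemma kernel_eq:
  assumes ne: "K \<noteq> carrier H"
  shows "kernel (H\<lparr>carrier := normalizer H K\<rparr>) (Out G) (chi2 H K \<phi>) = (center H \<inter> Fix H \<phi>) <#> K"
proof -
  interpret Gp: group G by (rule group_G)
  interpret AG: group "Aut G" by (rule Aut_group) (rule group_G)
  have sub: "subgroup (Inn G) (Aut G)" using Gp.Inn_normal normal_imp_subgroup by blast
  have iff: "chi2 H K \<phi> b = Inn G \<longleftrightarrow> A b \<in> Inn G" if b: "b \<in> normalizer H K" for b
    using AG.coset_join1[OF _ A_Aut[OF b] sub] AG.coset_join2[OF A_Aut[OF b] sub]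
    by (auto simp: chi2_eq)
  show ?thesis
  proof
    show "kernel (H\<lparr>carrier := normalizer H K\<rparr>) (Out G) (chi2 H K \<phi>) \<subseteq> (center H \<inter> Fix H \<phi>) <#> K"
      using kernel_sub[OF ne] iff by (auto simp: kernel_def Out_def)
  next
    show "(center H \<inter> Fix H \<phi>) <#> K \<subseteq> kernel (H\<lparr>carrier := normalizer H K\<rparr>) (Out G) (chi2 H K \<phi>)"
    proof
      fix x assume "x \<in> (center H \<inter> Fix H \<phi>) <#> K"
      then obtain j k where j: "j \<in> center H \<inter> Fix H \<phi>" and k: "k \<in> K" and x: "x = j \<otimes> k"
        unfolding set_mult_def by blast
      show "x \<in> kernel (H\<lparr>carrier := normalizer H K\<rparr>) (Out G) (chi2 H K \<phi>)"
        using kernel_sup[OF j k] iff x by (auto simp: kernel_def Out_def)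
    qed
  qed
qed

end

theorem lemma5p1:
  fixes H :: "'h monoid" and K :: "'h set" and \<phi> :: "'h \<Rightarrow> 'h"
  assumes "group H"
    and "subgroup K H" and "K \<noteq> carrier H"
    and "\<phi> \<in> iso H H"
  shows "chi2 H K \<phi> ` normalizer H K \<subseteq> OutV H K \<phi>
    \<and> chi2 H K \<phi> \<in> hom (H\<lparr>carrier := normalizer H K\<rparr>) (Out (HNN H K \<phi>))
    \<and> kernel (H\<lparr>carrier := normalizer H K\<rparr>) (Out (HNN H K \<phi>)) (chi2 H K \<phi>)
        = (center H \<inter> Fix H \<phi>) <#>\<^bsub>H\<^esub> K"
proof -
  interpret hnn H K \<phi> using assms by (simp add: hnn_def hnn_axioms_def)
  show ?thesis using chi2_OutV chi2_hom kernel_eq[OF assms(3)] by blast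
qed


end
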